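(* Let $p,q$ be odd primes with $q\mid p-1$, and let $G=A\rtimes N$ and $G'=\widehat A\rtimes N$ be as in the context. Then $G$ and $G'$ are not isocategorical, i.e. $\mathrm{Rep}(G)$ and $\mathrm{Rep}(G')$ are not equivalent as tensor categories.
   Context: $k$ algebraically closed of characteristic $0$; $\mathrm{Rep}(G)$ is the tensor category of finite-dimensional representations of $G$ over $k$. $N=\mathbb Z/p\mathbb Z\rtimes\mathbb Z/q\mathbb Z$ is the non-abelian group of order $pq$, $A\cong\mathbb Z/p\mathbb Z$ its normal subgroup of order $p$; $N$ acts on $A$ by conjugation and on $\widehat A=\mathrm{Hom}(A,k^\times)$ by the induced action $(\rho\triangleleft n)(a)=\rho(a\triangleleft n^{-1})$; $G=A\rtimes N$, $G'=\widehat A\rtimes N$. *)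

theory Defs
  imports "Jordan_Normal_Form.Matrix"
begin

class alg_closed_field_char_0 = field_char_0 +
  assumes alg_closed: "0 < n \<Longrightarrow> \<exists>x::'a. x ^ n + (\<Sum>i<n. c i * x ^ i) = 0"

text \<open>N = Z/p \<rtimes> Z/q, elements (a,c), with
  (a,c)(a',c') = (a + r^c a', c + c'), r of multiplicative order q mod p.
  A = Z/p (the normal subgroup {(a,0)} of N), N acting by conjugation: (a,c).x = r^c x.
  The group X \<rtimes> N, X = Z/p, where (a,c) acts on X by multiplication by s^c,
  has elements (x,a,c) and multiplication below.  G uses s = r (conjugation action
  on A); G' uses s = r^(q-1) = r^(-1) mod p (induced action on the dual group).\<close>

definition sd_carrier :: "nat \<Rightarrow> nat \<Rightarrow> (nat \<times> nat \<times> nat) set" where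
  "sd_carrier p q = {(x, a, c). x < p \<and> a < p \<and> c < q}"

definition sd_mult :: "nat \<Rightarrow> nat \<Rightarrow> nat \<Rightarrow> nat \<Rightarrow>
    nat \<times> nat \<times> nat \<Rightarrow> nat \<times> nat \<times> nat \<Rightarrow> nat \<times> nat \<times> nat" where
  "sd_mult p q r s g h =
     (case g of (x, a, c) \<Rightarrow> case h of (x', a', c') \<Rightarrow>
       ((x + s ^ c * x') mod p, (a + r ^ c * a') mod p, (c + c') mod q))"

definition sd_one :: "nat \<times> nat \<times> nat" where
  "sd_one = (0, 0, 0)"

definition kron :: "'a::semiring_1 mat \<Rightarrow> 'a mat \<Rightarrow> 'a mat" where
  "kron A B = mat (dim_row A * dim_row B) (dim_col A * dim_col B)
     (\<lambda>(i, j). A $$ (i div dim_row B, j div dim_col B) * B $$ (i mod dim_row B, j mod dim_col B))"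

text \<open>The tensor category Rep(G) of finite-dimensional representations of a finite group
  (carrier Gc, multiplication mul, unit e) over k: an object is (n, \<rho>) with
  \<rho> : G \<rightarrow> GL_n(k) a homomorphism; morphisms are intertwiners (matrices);
  composition is matrix product; tensor product is the Kronecker product, unit object
  the trivial 1-dimensional representation.  This monoidal structure is strict
  (associativity and unit constraints are identities).\<close>

type_synonym ('g, 'k) rep = "nat \<times> ('g \<Rightarrow> 'k mat)"

definition rep_obj :: "'g set \<Rightarrow> ('g \<Rightarrow> 'g \<Rightarrow> 'g) \<Rightarrow> 'g \<Rightarrow> ('g, 'k::field) rep set" where
  "rep_obj Gc mul e = {(n, \<rho>). (\<forall>g\<in>Gc. \<rho> g \<in> carrier_mat n n) \<and> \<rho> e = 1\<^sub>m n \<and>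
       (\<forall>g\<in>Gc. \<forall>h\<in>Gc. \<rho> (mul g h) = \<rho> g * \<rho> h)}"

definition rep_hom :: "'g set \<Rightarrow> ('g, 'k::field) rep \<Rightarrow> ('g, 'k) rep \<Rightarrow> 'k mat set" where
  "rep_hom Gc X Y = {T. T \<in> carrier_mat (fst Y) (fst X) \<and> (\<forall>g\<in>Gc. T * snd X g = snd Y g * T)}"

definition rep_tensor :: "('g, 'k::field) rep \<Rightarrow> ('g, 'k) rep \<Rightarrow> ('g, 'k) rep" where
  "rep_tensor X Y = (fst X * fst Y, \<lambda>g. kron (snd X g) (snd Y g))"

definition rep_unit :: "('g, 'k::field) rep" where
  "rep_unit = (1, \<lambda>g. 1\<^sub>m 1)"

definition rep_iso :: "'g set \<Rightarrow> ('g, 'k::field) rep \<Rightarrow> ('g, 'k) rep \<Rightarrow> 'k mat \<Rightarrow> bool" where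
  "rep_iso Gc X Y T \<longleftrightarrow> T \<in> rep_hom Gc X Y \<and>
     (\<exists>S\<in>rep_hom Gc Y X. S * T = 1\<^sub>m (fst X) \<and> T * S = 1\<^sub>m (fst Y))"

definition tensor_equivalence ::
  "'g set \<Rightarrow> ('g \<Rightarrow> 'g \<Rightarrow> 'g) \<Rightarrow> 'g \<Rightarrow> 'h set \<Rightarrow> ('h \<Rightarrow> 'h \<Rightarrow> 'h) \<Rightarrow> 'h \<Rightarrow>
   (('g, 'k::field) rep \<Rightarrow> ('h, 'k) rep) \<Rightarrow>
   (('g, 'k) rep \<Rightarrow> ('g, 'k) rep \<Rightarrow> 'k mat \<Rightarrow> 'k mat) \<Rightarrow>
   (('g, 'k) rep \<Rightarrow> ('g, 'k) rep \<Rightarrow> 'k mat) \<Rightarrow> 'k mat \<Rightarrow> bool" where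
  "tensor_equivalence G1 m1 e1 G2 m2 e2 F Fm J \<phi> \<longleftrightarrow>
     (let Ob1 = rep_obj G1 m1 e1; Ob2 = rep_obj G2 m2 e2 in
     \<comment> \<open>functor\<close>
     (\<forall>X\<in>Ob1. F X \<in> Ob2) \<and>
     (\<forall>X\<in>Ob1. \<forall>Y\<in>Ob1. \<forall>T\<in>rep_hom G1 X Y. Fm X Y T \<in> rep_hom G2 (F X) (F Y)) \<and>
     (\<forall>X\<in>Ob1. Fm X X (1\<^sub>m (fst X)) = 1\<^sub>m (fst (F X))) \<and>
     (\<forall>X\<in>Ob1. \<forall>Y\<in>Ob1. \<forall>Z\<in>Ob1. \<forall>T\<in>rep_hom G1 X Y. \<forall>S\<in>rep_hom G1 Y Z.
        Fm X Z (S * T) = Fm Y Z S * Fm X Y T) \<and>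
     \<comment> \<open>k-linear\<close>
     (\<forall>X\<in>Ob1. \<forall>Y\<in>Ob1. \<forall>T\<in>rep_hom G1 X Y. \<forall>T'\<in>rep_hom G1 X Y. \<forall>c.
        Fm X Y (T + T') = Fm X Y T + Fm X Y T' \<and> Fm X Y (c \<cdot>\<^sub>m T) = c \<cdot>\<^sub>m Fm X Y T) \<and>
     \<comment> \<open>tensor structure J : natural isomorphism\<close>
     (\<forall>X\<in>Ob1. \<forall>Y\<in>Ob1. rep_iso G2 (rep_tensor (F X) (F Y)) (F (rep_tensor X Y)) (J X Y)) \<and>
     (\<forall>X\<in>Ob1. \<forall>X'\<in>Ob1. \<forall>Y\<in>Ob1. \<forall>Y'\<in>Ob1. \<forall>T\<in>rep_hom G1 X X'. \<forall>S\<in>rep_hom G1 Y Y'.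
        J X' Y' * kron (Fm X X' T) (Fm Y Y' S)
          = Fm (rep_tensor X Y) (rep_tensor X' Y') (kron T S) * J X Y) \<and>
     \<comment> \<open>associativity coherence (associativity constraints are identities)\<close>
     (\<forall>X\<in>Ob1. \<forall>Y\<in>Ob1. \<forall>Z\<in>Ob1.
        J (rep_tensor X Y) Z * kron (J X Y) (1\<^sub>m (fst (F Z)))
          = J X (rep_tensor Y Z) * kron (1\<^sub>m (fst (F X))) (J Y Z)) \<and>
     \<comment> \<open>unit: \<phi> : 1 \<rightarrow> F 1 isomorphism, unit coherences (unit constraints are identities)\<close>
     rep_iso G2 rep_unit (F rep_unit) \<phi> \<and>
     (\<forall>X\<in>Ob1. J rep_unit X * kron \<phi> (1\<^sub>m (fst (F X))) = 1\<^sub>m (fst (F X)) \<and>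
               J X rep_unit * kron (1\<^sub>m (fst (F X))) \<phi> = 1\<^sub>m (fst (F X))) \<and>
     \<comment> \<open>equivalence: fully faithful and essentially surjective\<close>
     (\<forall>X\<in>Ob1. \<forall>Y\<in>Ob1. bij_betw (Fm X Y) (rep_hom G1 X Y) (rep_hom G2 (F X) (F Y))) \<and>
     (\<forall>Z\<in>Ob2. \<exists>X\<in>Ob1. \<exists>T. rep_iso G2 (F X) Z T))"

definition tensor_equivalent_Rep ::
  "'k::field itself \<Rightarrow> 'g set \<Rightarrow> ('g \<Rightarrow> 'g \<Rightarrow> 'g) \<Rightarrow> 'g \<Rightarrow> 'h set \<Rightarrow> ('h \<Rightarrow> 'h \<Rightarrow> 'h) \<Rightarrow> 'h \<Rightarrow> bool" where
  "tensor_equivalent_Rep (TYPE('k)) G1 m1 e1 G2 m2 e2 \<longleftrightarrow>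
     (\<exists>(F :: ('g, 'k) rep \<Rightarrow> ('h, 'k) rep) Fm J \<phi>.
        tensor_equivalence G1 m1 e1 G2 m2 e2 F Fm J \<phi>)"

end

theory Submission
  imports Defs "HOL-Computational_Algebra.Primes"
begin

lemma sum_split_divmod:
  fixes f :: "nat \<Rightarrow> nat \<Rightarrow> 'a::comm_monoid_add" and a b :: nat
  shows "(\<Sum>l<a*b. f (l div b) (l mod b)) = (\<Sum>l1<a. \<Sum>l2<b. f l1 l2)"
proof (cases "b = 0")
  case True then show ?thesis by simp
next
  case False
  have lt: "l1*b+l2 < a*b" if "l1 < a" "l2 < b" for l1 l2
  proof -
    have "l1*b+l2 < l1*b + b" using that by simp
    also have "\<dots> = (l1+1)*b" by simp
    also have "\<dots> \<le> a*b" using that by (intro mult_right_mono) auto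
    finally show ?thesis .
  qed
  have "(\<Sum>l1<a. \<Sum>l2<b. f l1 l2) = (\<Sum>(l1,l2)\<in>{..<a}\<times>{..<b}. f l1 l2)"
    by (simp add: sum.cartesian_product)
  also have "\<dots> = (\<Sum>l<a*b. f (l div b) (l mod b))"
    by (rule sum.reindex_bij_witness[where i="\<lambda>l. (l div b, l mod b)" and j="\<lambda>(l1,l2). l1*b+l2"])
      (use False lt in \<open>auto simp: less_mult_imp_div_less\<close>)
  finally show ?thesis by simp
qed

lemma kron_dim[simp]: "dim_row (kron A B) = dim_row A * dim_row B" "dim_col (kron A B) = dim_col A * dim_col B"
  by (simp_all add: kron_def)

lemma kron_index:
  "i < dim_row A * dim_row B \<Longrightarrow> j < dim_col A * dim_col B \<Longrightarrow>
   kron A B $$ (i,j) = A $$ (i div dim_row B, j div dim_col B) * B $$ (i mod dim_row B, j mod dim_col B)"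
  by (simp add: kron_def)

lemma kron_carrier[simp,intro]: "A \<in> carrier_mat n1 m1 \<Longrightarrow> B \<in> carrier_mat n2 m2 \<Longrightarrow> kron A B \<in> carrier_mat (n1*n2) (m1*m2)"
  by (metis carrier_matD carrier_matI kron_dim)

lemma div_lt: "i < a * (b::nat) \<Longrightarrow> i div b < a"
  by (rule less_mult_imp_div_less)
lemma mod_lt: "i < a * (b::nat) \<Longrightarrow> i mod b < b"
proof -
  assume "i < a * b"
  then have "b > 0" by (cases b) auto
  then show ?thesis by simp
qed

lemma kron_mult:
  fixes A B C D :: "'a::comm_semiring_1 mat"
  assumes A: "A \<in> carrier_mat n1 k1" and C: "C \<in> carrier_mat k1 m1"
    and B: "B \<in> carrier_mat n2 k2" and D: "D \<in> carrier_mat k2 m2"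
  shows "kron A B * kron C D = kron (A*C) (B*D)"
proof (rule eq_matI)
  fix i j assume i: "i < dim_row (kron (A*C) (B*D))" and j: "j < dim_col (kron (A*C) (B*D))"
  then have i': "i < n1*n2" and j': "j < m1*m2" using A B C D by auto
  have "(kron A B * kron C D) $$ (i,j) = (\<Sum>l<k1*k2. kron A B $$ (i,l) * kron C D $$ (l,j))"
    using A B C D i' j' by (simp add: index_mult_mat scalar_prod_def atLeast0LessThan)
  also have "\<dots> = (\<Sum>l<k1*k2. (A $$ (i div n2, l div k2) * B $$ (i mod n2, l mod k2)) *
        (C $$ (l div k2, j div m2) * D $$ (l mod k2, j mod m2)))"
    using A B C D i' j' by (intro sum.cong refl) (simp add: kron_index)
  also have "\<dots> = (\<Sum>l1<k1. \<Sum>l2<k2. (A $$ (i div n2, l1) * B $$ (i mod n2, l2)) *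
        (C $$ (l1, j div m2) * D $$ (l2, j mod m2)))"
    by (rule sum_split_divmod[where f="\<lambda>l1 l2. (A $$ (i div n2, l1) * B $$ (i mod n2, l2)) *
        (C $$ (l1, j div m2) * D $$ (l2, j mod m2))"])
  also have "\<dots> = (\<Sum>l1<k1. A $$ (i div n2, l1) * C $$ (l1, j div m2)) * (\<Sum>l2<k2. B $$ (i mod n2, l2) * D $$ (l2, j mod m2))"
    by (simp add: sum_product mult_ac)
  also have "\<dots> = kron (A*C) (B*D) $$ (i,j)"
    using A B C D i' j' div_lt[OF i'] mod_lt[OF i'] div_lt[OF j'] mod_lt[OF j']
    by (simp add: kron_index index_mult_mat scalar_prod_def atLeast0LessThan)
  finally show "(kron A B * kron C D) $$ (i,j) = kron (A*C) (B*D) $$ (i,j)" .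
qed (use A B C D in auto)

lemma kron_one: "kron (1\<^sub>m a) (1\<^sub>m b) = (1\<^sub>m (a*b) :: 'a::semiring_1 mat)"
proof (rule eq_matI)
  fix i j assume "i < dim_row (1\<^sub>m (a*b) :: 'a mat)" "j < dim_col (1\<^sub>m (a*b) :: 'a mat)"
  then have i: "i < a*b" and j: "j < a*b" by auto
  have "(i div b = j div b \<and> i mod b = j mod b) = (i = j)"
    by (metis div_mult_mod_eq)
  then show "kron (1\<^sub>m a) (1\<^sub>m b) $$ (i,j) = (1\<^sub>m (a*b) :: 'a mat) $$ (i,j)"
    using i j div_lt[OF i] mod_lt[OF i] div_lt[OF j] mod_lt[OF j] by (auto simp: kron_index)
qed auto

lemma kron_smult_left: "kron (c \<cdot>\<^sub>m A) B = c \<cdot>\<^sub>m kron A (B :: 'a::comm_ring_1 mat)"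
  by (rule eq_matI) (auto simp: kron_index div_lt mod_lt mult_ac)
lemma kron_smult_right: "kron A (c \<cdot>\<^sub>m B) = c \<cdot>\<^sub>m kron A (B :: 'a::comm_ring_1 mat)"
  by (rule eq_matI) (auto simp: kron_index div_lt mod_lt mult_ac)

lemma kron_one_one_left: "kron (1\<^sub>m 1) A = (A :: 'a::semiring_1 mat)"
  by (rule eq_matI) (auto simp: kron_index)

definition hom_zero :: "'g set \<Rightarrow> ('g, 'k::field) rep \<Rightarrow> ('g, 'k) rep \<Rightarrow> bool" where
  "hom_zero G X Y \<longleftrightarrow> (\<forall>T\<in>rep_hom G X Y. T = 0\<^sub>m (fst Y) (fst X))"

definition end_scalar :: "'g set \<Rightarrow> ('g, 'k::field) rep \<Rightarrow> bool" where
  "end_scalar G X \<longleftrightarrow> (\<forall>T\<in>rep_hom G X X. \<exists>c. T = c \<cdot>\<^sub>m 1\<^sub>m (fst X))"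

fun rpow :: "('g, 'k::field) rep \<Rightarrow> nat \<Rightarrow> ('g, 'k) rep" where
  "rpow X 0 = rep_unit"
| "rpow X (Suc n) = rep_tensor X (rpow X n)"

lemma zero_smult_mat': "M \<in> carrier_mat n m \<Longrightarrow> (0::'a::field) \<cdot>\<^sub>m M = 0\<^sub>m n m"
  by (rule eq_matI) auto

lemma obj_carrier: "X \<in> rep_obj G m e \<Longrightarrow> g \<in> G \<Longrightarrow> snd X g \<in> carrier_mat (fst X) (fst X)"
  by (auto simp: rep_obj_def)

lemma obj_mult: "X \<in> rep_obj G m e \<Longrightarrow> g \<in> G \<Longrightarrow> h \<in> G \<Longrightarrow> snd X (m g h) = snd X g * snd X h"
  by (auto simp: rep_obj_def)

lemma obj_one: "X \<in> rep_obj G m e \<Longrightarrow> snd X e = 1\<^sub>m (fst X)"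
  by (auto simp: rep_obj_def)

lemma homD: "T \<in> rep_hom G X Y \<Longrightarrow> T \<in> carrier_mat (fst Y) (fst X)"
  "T \<in> rep_hom G X Y \<Longrightarrow> g \<in> G \<Longrightarrow> T * snd X g = snd Y g * T"
  by (auto simp: rep_hom_def)

lemma homI: "T \<in> carrier_mat (fst Y) (fst X) \<Longrightarrow> (\<And>g. g \<in> G \<Longrightarrow> T * snd X g = snd Y g * T) \<Longrightarrow> T \<in> rep_hom G X Y"
  by (auto simp: rep_hom_def)

lemma hom_comp:
  assumes X: "X \<in> rep_obj G m e" and Y: "Y \<in> rep_obj G m e" and Z: "Z \<in> rep_obj G m e"
    and T: "T \<in> rep_hom G X Y" and S: "S \<in> rep_hom G Y Z"
  shows "S * T \<in> rep_hom G X Z"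
proof (rule homI)
  show "S * T \<in> carrier_mat (fst Z) (fst X)" using homD(1)[OF T] homD(1)[OF S] by auto
  fix g assume g: "g \<in> G"
  note c = obj_carrier[OF X g] obj_carrier[OF Y g] obj_carrier[OF Z g] homD(1)[OF T] homD(1)[OF S]
  have "S * T * snd X g = S * (T * snd X g)" using c by (simp add: assoc_mult_mat[of _ "fst Z" "fst Y"])
  also have "\<dots> = S * (snd Y g * T)" using homD(2)[OF T g] by simp
  also have "\<dots> = (S * snd Y g) * T" using c by (simp add: assoc_mult_mat[of _ "fst Z" "fst Y"])
  also have "\<dots> = (snd Z g * S) * T" using homD(2)[OF S g] by simp
  also have "\<dots> = snd Z g * (S * T)" using c by (simp add: assoc_mult_mat[of _ "fst Z" "fst Z"])
  finally show "S * T * snd X g = snd Z g * (S * T)" .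
qed

lemma hom_id: "X \<in> rep_obj G m e \<Longrightarrow> 1\<^sub>m (fst X) \<in> rep_hom G X X"
  by (rule homI) (auto dest: obj_carrier)

lemma hom_smult: assumes T: "T \<in> rep_hom G X Y" and X: "X \<in> rep_obj G m e" and Y: "Y \<in> rep_obj G m e"
  shows "c \<cdot>\<^sub>m T \<in> rep_hom G X Y"
proof (rule homI)
  show "c \<cdot>\<^sub>m T \<in> carrier_mat (fst Y) (fst X)" using homD(1)[OF T] by simp
  fix g assume g: "g \<in> G"
  have "c \<cdot>\<^sub>m T * snd X g = c \<cdot>\<^sub>m (T * snd X g)"
    by (rule mult_smult_assoc_mat[OF homD(1)[OF T] obj_carrier[OF X g]])
  also have "\<dots> = c \<cdot>\<^sub>m (snd Y g * T)" using homD(2)[OF T g] by simp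
  also have "\<dots> = snd Y g * (c \<cdot>\<^sub>m T)"
    by (rule mult_smult_distrib[OF obj_carrier[OF Y g] homD(1)[OF T], symmetric])
  finally show "c \<cdot>\<^sub>m T * snd X g = snd Y g * (c \<cdot>\<^sub>m T)" .
qed

lemma iso_sym: "rep_iso G X Y T \<Longrightarrow> \<exists>S. rep_iso G Y X S"
  unfolding rep_iso_def by (metis homD(1))

lemma iso_trans:
  assumes X: "X \<in> rep_obj G m e" and Y: "Y \<in> rep_obj G m e" and Z: "Z \<in> rep_obj G m e"
    and T: "rep_iso G X Y T" and S: "rep_iso G Y Z S"
  shows "rep_iso G X Z (S * T)"
proof -
  obtain T' where T': "T' \<in> rep_hom G Y X" "T' * T = 1\<^sub>m (fst X)" "T * T' = 1\<^sub>m (fst Y)" and Th: "T \<in> rep_hom G X Y"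
    using T unfolding rep_iso_def by blast
  obtain S' where S': "S' \<in> rep_hom G Z Y" "S' * S = 1\<^sub>m (fst Y)" "S * S' = 1\<^sub>m (fst Z)" and Sh: "S \<in> rep_hom G Y Z"
    using S unfolding rep_iso_def by blast
  note c = homD(1)[OF Th] homD(1)[OF Sh] homD(1)[OF T'(1)] homD(1)[OF S'(1)]
  have "(T' * S') * (S * T) = T' * (S' * (S * T))" using c
    by (intro assoc_mult_mat[of _ "fst X" "fst Y"]) auto
  also have "\<dots> = T' * ((S' * S) * T)" using c
    by (subst assoc_mult_mat[of S' "fst Y" "fst Z"]) auto
  also have "\<dots> = 1\<^sub>m (fst X)" using S'(2) T'(2) c by simp
  finally have 1: "(T' * S') * (S * T) = 1\<^sub>m (fst X)" .
  have "(S * T) * (T' * S') = S * (T * (T' * S'))" using c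
    by (intro assoc_mult_mat[of _ "fst Z" "fst Y"]) auto
  also have "\<dots> = S * ((T * T') * S')" using c
    by (subst assoc_mult_mat[of T "fst Y" "fst X"]) auto
  also have "\<dots> = 1\<^sub>m (fst Z)" using S'(3) T'(3) c by simp
  finally have 2: "(S * T) * (T' * S') = 1\<^sub>m (fst Z)" .
  show ?thesis unfolding rep_iso_def
    using hom_comp[OF X Y Z Th Sh] hom_comp[OF Z Y X S'(1) T'(1)] 1 2 by blast
qed

lemma hom_zero_iso:
  assumes A: "A \<in> rep_obj G m e" and A': "A' \<in> rep_obj G m e" and B: "B \<in> rep_obj G m e" and B': "B' \<in> rep_obj G m e"
    and T: "rep_iso G A A' T" and S: "rep_iso G B B' S" and z: "hom_zero G A B"
  shows "hom_zero G A' B'"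
  unfolding hom_zero_def
proof
  fix U assume U: "U \<in> rep_hom G A' B'"
  obtain T' where T': "T' \<in> rep_hom G A' A" "T' * T = 1\<^sub>m (fst A)" "T * T' = 1\<^sub>m (fst A')" and Th: "T \<in> rep_hom G A A'"
    using T unfolding rep_iso_def by blast
  obtain S' where S': "S' \<in> rep_hom G B' B" "S' * S = 1\<^sub>m (fst B)" "S * S' = 1\<^sub>m (fst B')" and Sh: "S \<in> rep_hom G B B'"
    using S unfolding rep_iso_def by blast
  note c = homD(1)[OF Th] homD(1)[OF Sh] homD(1)[OF T'(1)] homD(1)[OF S'(1)] homD(1)[OF U]
  have "S' * U * T \<in> rep_hom G A B"
    by (rule hom_comp[OF A A' B Th]) (rule hom_comp[OF A' B' B U S'(1)])
  then have 0: "S' * U * T = 0\<^sub>m (fst B) (fst A)" using z unfolding hom_zero_def by blast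
  have "S * (S' * U * T) * T' = (S * (S' * U)) * T * T'"
    using c by (subst assoc_mult_mat[symmetric, of S "fst B'" "fst B" _ "fst A'" T "fst A"]) auto
  also have "\<dots> = ((S * S') * U) * T * T'"
    using c by (subst assoc_mult_mat[of S "fst B'" "fst B" S' "fst B'" U "fst A'"]) auto
  also have "\<dots> = U * T * T'" using c S'(3) by simp
  also have "\<dots> = U * (T * T')" using c by (subst assoc_mult_mat[of U "fst B'" "fst A'" T "fst A" T' "fst A'"]) auto
  also have "\<dots> = U" using c T'(3) by simp
  finally have eqU: "S * (S' * U * T) * T' = U" .
  then have "U = S * 0\<^sub>m (fst B) (fst A) * T'" using 0 by simp
  also have "\<dots> = 0\<^sub>m (fst B') (fst A')" using c by simp
  finally show "U = 0\<^sub>m (fst B') (fst A')" .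
qed

lemma end_scalar_iso:
  assumes A: "A \<in> rep_obj G m e" and A': "A' \<in> rep_obj G m e"
    and T: "rep_iso G A A' T" and z: "end_scalar G A"
  shows "end_scalar G A'"
  unfolding end_scalar_def
proof
  fix U assume U: "U \<in> rep_hom G A' A'"
  obtain T' where T': "T' \<in> rep_hom G A' A" "T' * T = 1\<^sub>m (fst A)" "T * T' = 1\<^sub>m (fst A')" and Th: "T \<in> rep_hom G A A'"
    using T unfolding rep_iso_def by blast
  note c = homD(1)[OF Th] homD(1)[OF T'(1)] homD(1)[OF U]
  have "T' * U * T \<in> rep_hom G A A"
    by (rule hom_comp[OF A A' A Th]) (rule hom_comp[OF A' A' A U T'(1)])
  then obtain k where k: "T' * U * T = k \<cdot>\<^sub>m 1\<^sub>m (fst A)" using z unfolding end_scalar_def by blast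
  have "T * (T' * U * T) * T' = (T * (T' * U)) * T * T'"
    using c by (subst assoc_mult_mat[symmetric, of T "fst A'" "fst A" _ "fst A'" T "fst A"]) auto
  also have "\<dots> = ((T * T') * U) * T * T'"
    using c by (subst assoc_mult_mat[of T "fst A'" "fst A" T' "fst A'" U "fst A'"]) auto
  also have "\<dots> = U * T * T'" using c T'(3) by simp
  also have "\<dots> = U * (T * T')" using c by (subst assoc_mult_mat[of U "fst A'" "fst A'" T "fst A" T' "fst A'"]) auto
  also have "\<dots> = U" using c T'(3) by simp
  finally have eqU: "T * (T' * U * T) * T' = U" .
  then have "U = T * (k \<cdot>\<^sub>m 1\<^sub>m (fst A)) * T'" using k by simp
  also have "\<dots> = k \<cdot>\<^sub>m (T * T')" using c
  proof -
    have "T * (k \<cdot>\<^sub>m 1\<^sub>m (fst A)) = k \<cdot>\<^sub>m T"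
      using c by (subst mult_smult_distrib[of T "fst A'" "fst A" _ "fst A"]) auto
    then show ?thesis using c by (simp add: mult_smult_assoc_mat[of T "fst A'" "fst A"])
  qed
  finally show "\<exists>k. U = k \<cdot>\<^sub>m 1\<^sub>m (fst A')" using T'(3) by auto
qed

lemma tensor_obj:
  assumes X: "X \<in> rep_obj G m e" and Y: "Y \<in> rep_obj G m e"
  shows "rep_tensor X Y \<in> rep_obj G m e"
proof -
  have "snd (rep_tensor X Y) (m g h) = snd (rep_tensor X Y) g * snd (rep_tensor X Y) h" if g: "g \<in> G" and h: "h \<in> G" for g h
    using obj_carrier[OF X g] obj_carrier[OF X h] obj_carrier[OF Y g] obj_carrier[OF Y h] obj_mult[OF X g h] obj_mult[OF Y g h]
    by (simp add: rep_tensor_def kron_mult)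
  moreover have "snd (rep_tensor X Y) e = 1\<^sub>m (fst (rep_tensor X Y))"
    using obj_one[OF X] obj_one[OF Y] by (simp add: rep_tensor_def kron_one)
  moreover have "snd (rep_tensor X Y) g \<in> carrier_mat (fst (rep_tensor X Y)) (fst (rep_tensor X Y))" if g: "g \<in> G" for g
    using obj_carrier[OF X g] obj_carrier[OF Y g] by (simp add: rep_tensor_def)
  ultimately show ?thesis unfolding rep_obj_def by (cases "rep_tensor X Y") auto
qed

lemma unit_obj: "rep_unit \<in> rep_obj G m e"
  unfolding rep_obj_def rep_unit_def by auto

lemma rpow_obj: "X \<in> rep_obj G m e \<Longrightarrow> rpow X n \<in> rep_obj G m e"
  by (induction n) (auto intro: tensor_obj unit_obj)

lemma tensor_hom:
  assumes X: "X \<in> rep_obj G m e" and Y: "Y \<in> rep_obj G m e" and X': "X' \<in> rep_obj G m e" and Y': "Y' \<in> rep_obj G m e"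
    and T: "T \<in> rep_hom G X X'" and S: "S \<in> rep_hom G Y Y'"
  shows "kron T S \<in> rep_hom G (rep_tensor X Y) (rep_tensor X' Y')"
proof (rule homI)
  show "kron T S \<in> carrier_mat (fst (rep_tensor X' Y')) (fst (rep_tensor X Y))"
    using homD(1)[OF T] homD(1)[OF S] by (simp add: rep_tensor_def)
  fix g assume g: "g \<in> G"
  note c = homD(1)[OF T] homD(1)[OF S] obj_carrier[OF X g] obj_carrier[OF Y g] obj_carrier[OF X' g] obj_carrier[OF Y' g]
  show "kron T S * snd (rep_tensor X Y) g = snd (rep_tensor X' Y') g * kron T S"
    using c homD(2)[OF T g] homD(2)[OF S g] by (simp add: rep_tensor_def kron_mult)
qed

lemma tensor_iso:
  assumes X: "X \<in> rep_obj G m e" and Y: "Y \<in> rep_obj G m e" and X': "X' \<in> rep_obj G m e" and Y': "Y' \<in> rep_obj G m e"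
    and T: "rep_iso G X X' T" and S: "rep_iso G Y Y' S"
  shows "rep_iso G (rep_tensor X Y) (rep_tensor X' Y') (kron T S)"
proof -
  obtain T' where T': "T' \<in> rep_hom G X' X" "T' * T = 1\<^sub>m (fst X)" "T * T' = 1\<^sub>m (fst X')" and Th: "T \<in> rep_hom G X X'"
    using T unfolding rep_iso_def by blast
  obtain S' where S': "S' \<in> rep_hom G Y' Y" "S' * S = 1\<^sub>m (fst Y)" "S * S' = 1\<^sub>m (fst Y')" and Sh: "S \<in> rep_hom G Y Y'"
    using S unfolding rep_iso_def by blast
  note c = homD(1)[OF Th] homD(1)[OF Sh] homD(1)[OF T'(1)] homD(1)[OF S'(1)]
  show ?thesis unfolding rep_iso_def
    apply (intro conjI bexI[of _ "kron T' S'"])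
    using tensor_hom[OF X Y X' Y' Th Sh] tensor_hom[OF X' Y' X Y T'(1) S'(1)] c T' S'
    by (auto simp: kron_mult kron_one rep_tensor_def)
qed

lemma iso_refl: assumes X: "X \<in> rep_obj G m e" shows "rep_iso G X X (1\<^sub>m (fst X))"
proof -
  have h: "1\<^sub>m (fst X) \<in> rep_hom G X X" by (rule hom_id[OF X])
  show ?thesis unfolding rep_iso_def
    by (rule conjI[OF h], rule bexI[OF _ h]) simp
qed

context
  fixes G1 :: "'g set" and m1 e1 and G2 :: "'h set" and m2 e2
    and F :: "('g, 'k::field) rep \<Rightarrow> ('h, 'k) rep" and Fm J \<phi>
  assumes TE: "tensor_equivalence G1 m1 e1 G2 m2 e2 F Fm J \<phi>"
begin

lemmas TEu = TE[unfolded tensor_equivalence_def Let_def]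

lemma te_obj: "X \<in> rep_obj G1 m1 e1 \<Longrightarrow> F X \<in> rep_obj G2 m2 e2"
  using TEu[THEN conjunct1] by blast

lemma te_hom: "X \<in> rep_obj G1 m1 e1 \<Longrightarrow> Y \<in> rep_obj G1 m1 e1 \<Longrightarrow> T \<in> rep_hom G1 X Y \<Longrightarrow> Fm X Y T \<in> rep_hom G2 (F X) (F Y)"
  using TEu[THEN conjunct2, THEN conjunct1] by blast

lemma te_id: "X \<in> rep_obj G1 m1 e1 \<Longrightarrow> Fm X X (1\<^sub>m (fst X)) = 1\<^sub>m (fst (F X))"
  using TEu[THEN conjunct2, THEN conjunct2, THEN conjunct1] by blast

lemma te_smult: "X \<in> rep_obj G1 m1 e1 \<Longrightarrow> Y \<in> rep_obj G1 m1 e1 \<Longrightarrow> T \<in> rep_hom G1 X Y \<Longrightarrow> Fm X Y (c \<cdot>\<^sub>m T) = c \<cdot>\<^sub>m Fm X Y T"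
  using TEu[THEN conjunct2, THEN conjunct2, THEN conjunct2, THEN conjunct2, THEN conjunct1] by blast

lemma te_J: "X \<in> rep_obj G1 m1 e1 \<Longrightarrow> Y \<in> rep_obj G1 m1 e1 \<Longrightarrow> rep_iso G2 (rep_tensor (F X) (F Y)) (F (rep_tensor X Y)) (J X Y)"
  using TEu[THEN conjunct2, THEN conjunct2, THEN conjunct2, THEN conjunct2, THEN conjunct2, THEN conjunct1] by blast

lemma te_phi: "rep_iso G2 rep_unit (F rep_unit) \<phi>"
  using TEu[THEN conjunct2, THEN conjunct2, THEN conjunct2, THEN conjunct2, THEN conjunct2, THEN conjunct2, THEN conjunct2, THEN conjunct2, THEN conjunct1] by blast

lemma te_bij: "X \<in> rep_obj G1 m1 e1 \<Longrightarrow> Y \<in> rep_obj G1 m1 e1 \<Longrightarrow> bij_betw (Fm X Y) (rep_hom G1 X Y) (rep_hom G2 (F X) (F Y))"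
  using TEu[THEN conjunct2, THEN conjunct2, THEN conjunct2, THEN conjunct2, THEN conjunct2, THEN conjunct2, THEN conjunct2, THEN conjunct2, THEN conjunct2, THEN conjunct2, THEN conjunct1] by blast

lemma te_zero:
  assumes X: "X \<in> rep_obj G1 m1 e1" and Y: "Y \<in> rep_obj G1 m1 e1"
  shows "Fm X Y (0\<^sub>m (fst Y) (fst X)) = 0\<^sub>m (fst (F Y)) (fst (F X))"
proof -
  have z: "0\<^sub>m (fst Y) (fst X) \<in> rep_hom G1 X Y"
    using X Y by (intro homI) (auto dest!: obj_carrier)
  have "Fm X Y (0\<^sub>m (fst Y) (fst X)) = Fm X Y (0 \<cdot>\<^sub>m 0\<^sub>m (fst Y) (fst X))" by simp
  also have "\<dots> = 0 \<cdot>\<^sub>m Fm X Y (0\<^sub>m (fst Y) (fst X))" by (rule te_smult[OF X Y z])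
  also have "\<dots> = 0\<^sub>m (fst (F Y)) (fst (F X))"
    by (rule zero_smult_mat'[OF homD(1)[OF te_hom[OF X Y z]]])
  finally show ?thesis .
qed

lemma te_hom_zero:
  assumes X: "X \<in> rep_obj G1 m1 e1" and Y: "Y \<in> rep_obj G1 m1 e1" and z: "hom_zero G1 X Y"
  shows "hom_zero G2 (F X) (F Y)"
  unfolding hom_zero_def
proof
  fix U assume U: "U \<in> rep_hom G2 (F X) (F Y)"
  then obtain T where T: "T \<in> rep_hom G1 X Y" "U = Fm X Y T"
    using te_bij[OF X Y] unfolding bij_betw_def by blast
  then have "T = 0\<^sub>m (fst Y) (fst X)" using z unfolding hom_zero_def by blast
  then show "U = 0\<^sub>m (fst (F Y)) (fst (F X))" using T te_zero[OF X Y] by simp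
qed

lemma te_end_scalar:
  assumes X: "X \<in> rep_obj G1 m1 e1" and z: "end_scalar G1 X"
  shows "end_scalar G2 (F X)"
  unfolding end_scalar_def
proof
  fix U assume U: "U \<in> rep_hom G2 (F X) (F X)"
  then obtain T where T: "T \<in> rep_hom G1 X X" "U = Fm X X T"
    using te_bij[OF X X] unfolding bij_betw_def by blast
  then obtain c where c: "T = c \<cdot>\<^sub>m 1\<^sub>m (fst X)" using z unfolding end_scalar_def by blast
  have "U = c \<cdot>\<^sub>m Fm X X (1\<^sub>m (fst X))" using T c te_smult[OF X X hom_id[OF X]] by simp
  then show "\<exists>c. U = c \<cdot>\<^sub>m 1\<^sub>m (fst (F X))" using te_id[OF X] by auto
qed

lemma te_not_end_scalar:
  assumes X: "X \<in> rep_obj G1 m1 e1" and z: "\<not> end_scalar G1 X"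
  shows "\<not> end_scalar G2 (F X)"
proof
  assume s: "end_scalar G2 (F X)"
  obtain T where T: "T \<in> rep_hom G1 X X" and nT: "\<forall>c. T \<noteq> c \<cdot>\<^sub>m 1\<^sub>m (fst X)"
    using z unfolding end_scalar_def by blast
  obtain c where c: "Fm X X T = c \<cdot>\<^sub>m 1\<^sub>m (fst (F X))"
    using s te_hom[OF X X T] unfolding end_scalar_def by blast
  have h1: "c \<cdot>\<^sub>m 1\<^sub>m (fst X) \<in> rep_hom G1 X X" by (rule hom_smult[OF hom_id[OF X] X X])
  have "Fm X X (c \<cdot>\<^sub>m 1\<^sub>m (fst X)) = c \<cdot>\<^sub>m 1\<^sub>m (fst (F X))"
    using te_smult[OF X X hom_id[OF X]] te_id[OF X] by simp
  then have "T = c \<cdot>\<^sub>m 1\<^sub>m (fst X)"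
    using te_bij[OF X X] T h1 c unfolding bij_betw_def inj_on_def by metis
  then show False using nT by blast
qed

lemma te_pow:
  assumes X: "X \<in> rep_obj G1 m1 e1"
  shows "\<exists>T. rep_iso G2 (rpow (F X) n) (F (rpow X n)) T"
proof (induction n)
  case 0
  then show ?case using te_phi by auto
next
  case (Suc n)
  then obtain T where T: "rep_iso G2 (rpow (F X) n) (F (rpow X n)) T" by blast
  have FX: "F X \<in> rep_obj G2 m2 e2" by (rule te_obj[OF X])
  have P: "rpow X n \<in> rep_obj G1 m1 e1" by (rule rpow_obj[OF X])
  have FP: "F (rpow X n) \<in> rep_obj G2 m2 e2" by (rule te_obj[OF P])
  have 1: "rep_iso G2 (rep_tensor (F X) (rpow (F X) n)) (rep_tensor (F X) (F (rpow X n))) (kron (1\<^sub>m (fst (F X))) T)"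
    by (rule tensor_iso[OF FX rpow_obj[OF FX] FX FP iso_refl[OF FX] T])
  have 2: "rep_iso G2 (rep_tensor (F X) (F (rpow X n))) (F (rep_tensor X (rpow X n))) (J X (rpow X n))"
    by (rule te_J[OF X P])
  show ?case
    using iso_trans[OF tensor_obj[OF FX rpow_obj[OF FX]] tensor_obj[OF FX FP] te_obj[OF tensor_obj[OF X P]] 1 2]
    by auto
qed

lemma te_final:
  assumes X: "X \<in> rep_obj G1 m1 e1" and Y: "Y \<in> rep_obj G1 m1 e1"
    and z: "hom_zero G1 rep_unit (rep_tensor X (rpow Y b))"
  shows "hom_zero G2 rep_unit (rep_tensor (F X) (rpow (F Y) b))"
proof -
  have P: "rpow Y b \<in> rep_obj G1 m1 e1" by (rule rpow_obj[OF Y])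
  have XP: "rep_tensor X (rpow Y b) \<in> rep_obj G1 m1 e1" by (rule tensor_obj[OF X P])
  have FX: "F X \<in> rep_obj G2 m2 e2" by (rule te_obj[OF X])
  have FY: "F Y \<in> rep_obj G2 m2 e2" by (rule te_obj[OF Y])
  have FP: "F (rpow Y b) \<in> rep_obj G2 m2 e2" by (rule te_obj[OF P])
  have h: "hom_zero G2 (F rep_unit) (F (rep_tensor X (rpow Y b)))"
    by (rule te_hom_zero[OF unit_obj XP z])
  obtain T where T: "rep_iso G2 (rpow (F Y) b) (F (rpow Y b)) T" using te_pow[OF Y] by blast
  have 1: "rep_iso G2 (rep_tensor (F X) (rpow (F Y) b)) (rep_tensor (F X) (F (rpow Y b))) (kron (1\<^sub>m (fst (F X))) T)"
    by (rule tensor_iso[OF FX rpow_obj[OF FY] FX FP iso_refl[OF FX] T])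
  have 2: "rep_iso G2 (rep_tensor (F X) (F (rpow Y b))) (F (rep_tensor X (rpow Y b))) (J X (rpow Y b))"
    by (rule te_J[OF X P])
  have 3: "rep_iso G2 (rep_tensor (F X) (rpow (F Y) b)) (F (rep_tensor X (rpow Y b))) (J X (rpow Y b) * kron (1\<^sub>m (fst (F X))) T)"
    by (rule iso_trans[OF tensor_obj[OF FX rpow_obj[OF FY]] tensor_obj[OF FX FP] te_obj[OF XP] 1 2])
  obtain S1 where S1: "rep_iso G2 (F (rep_tensor X (rpow Y b))) (rep_tensor (F X) (rpow (F Y) b)) S1"
    using iso_sym[OF 3] by blast
  obtain S2 where S2: "rep_iso G2 (F rep_unit) rep_unit S2"
    using iso_sym[OF te_phi] by blast
  show ?thesis
    by (rule hom_zero_iso[OF te_obj[OF unit_obj] unit_obj te_obj[OF XP] tensor_obj[OF FX rpow_obj[OF FY]] S2 S1 h])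
qed

lemma te_final2:
  assumes X: "X \<in> rep_obj G1 m1 e1" and z: "\<not> end_scalar G1 (rep_tensor X X)"
  shows "\<not> end_scalar G2 (rep_tensor (F X) (F X))"
proof
  assume s: "end_scalar G2 (rep_tensor (F X) (F X))"
  have FX: "F X \<in> rep_obj G2 m2 e2" by (rule te_obj[OF X])
  have "end_scalar G2 (F (rep_tensor X X))"
    by (rule end_scalar_iso[OF tensor_obj[OF FX FX] te_obj[OF tensor_obj[OF X X]] te_J[OF X X] s])
  then show False using te_not_end_scalar[OF tensor_obj[OF X X] z] by blast
qed

end

lemma int_inv_exists:
  fixes p :: nat and a :: int
  assumes p: "prime p" and a: "\<not> int p dvd a"
  shows "\<exists>u. int p dvd (u * a - 1)"
proof -
  have "coprime (int p) a" using a p by (simp add: prime_imp_coprime)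
  then have "gcd a (int p) = 1" by (simp add: gcd.commute coprime_iff_gcd_eq_1)
  then obtain u v where "u * a + v * int p = 1" using bezout_int[of a "int p"] by auto
  then have "u * a - 1 = int p * (- v)" by (simp add: algebra_simps)
  then show ?thesis by (metis dvdI)
qed

lemma int_solve:
  fixes p :: nat and a c :: int
  assumes p: "prime p" and a: "\<not> int p dvd a"
  shows "\<exists>m::nat. int p dvd (c + int m * a)"
proof -
  obtain u where u: "int p dvd (u * a - 1)" using int_inv_exists[OF p a] by blast
  have pos: "int p > 0" using prime_gt_1_nat[OF p] by simp
  define M where "M = (- c * u) mod int p"
  have M0: "M \<ge> 0" using pos by (simp add: M_def)
  define D where "D = (- c * u) div int p"
  have h: "(- c * u) div int p * int p + M = - c * u" unfolding M_def by (rule div_mult_mod_eq)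
  have eqM: "M = - c * u - int p * D" using h unfolding D_def by (simp add: mult.commute)
  have "c + M * a = - c * (u * a - 1) - int p * D * a" by (simp only: eqM) (simp add: algebra_simps)
  moreover have "int p dvd - c * (u * a - 1) - int p * D * a"
    using u by (intro dvd_diff) (auto simp: dvd_mult)
  ultimately have "int p dvd (c + M * a)" by simp
  moreover have "int (nat M) = M" using M0 by simp
  ultimately show ?thesis by (metis)
qed

locale pqr =
  fixes p q r :: nat
  assumes pp: "prime p" and qp: "prime q" and po: "odd p" and qo: "odd q"
    and r1: "r mod p \<noteq> 1" and rq: "r ^ q mod p = 1"
begin

definition s where "s = r ^ (q - 1)"

lemma p_gt2: "p > 2"
  using prime_ge_2_nat[OF pp] po by (cases "p = 2") auto
lemma q_gt2: "q > 2"
  using prime_ge_2_nat[OF qp] qo by (cases "q = 2") auto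
lemma p_pos: "p > 0" using p_gt2 by simp
lemma q_pos: "q > 0" using q_gt2 by simp

lemma not_dvd_r: "\<not> p dvd r"
proof
  assume "p dvd r"
  moreover have "r ^ q = r * r ^ (q - 1)" using q_pos by (metis Suc_diff_1 power_Suc)
  ultimately have "p dvd r ^ q" by simp
  then have "r ^ q mod p = 0" by simp
  then show False using rq by simp
qed

lemma rpow_mod: "r ^ e mod p = r ^ (e mod q) mod p"
proof -
  have "r ^ e = r ^ (q * (e div q) + e mod q)" by simp
  also have "\<dots> = (r ^ q) ^ (e div q) * r ^ (e mod q)" by (simp only: power_add power_mult)
  finally have "r ^ e = (r ^ q) ^ (e div q) * r ^ (e mod q)" .
  then have "r ^ e mod p = ((r ^ q mod p) ^ (e div q) mod p * (r ^ (e mod q))) mod p"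
    by (metis mod_mult_left_eq power_mod)
  then show ?thesis using rq by simp
qed

lemma r_ord: assumes "0 < c" "c < q" shows "r ^ c mod p \<noteq> 1"
proof
  assume h: "r ^ c mod p = 1"
  have "\<not> q dvd c" using assms by (auto dest: dvd_imp_le)
  then have "coprime c q" using prime_imp_coprime[OF qp] by (simp add: coprime_commute)
  then have g: "gcd c q = 1" by simp
  obtain x y where xy: "c * x = q * y + 1" using bezout_nat[of c q] assms g by auto
  have "r ^ (c * x) mod p = 1"
    by (metis h power_mod power_mult power_one mod_less prime_gt_1_nat[OF pp])
  moreover have "r ^ (q * y + 1) mod p = r mod p"
  proof -
    have "r ^ (q * y + 1) = (r ^ q) ^ y * r" by (simp add: power_add power_mult)
    then have "r ^ (q * y + 1) mod p = ((r ^ q mod p) ^ y mod p * r) mod p"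
      by (metis mod_mult_left_eq power_mod)
    then show ?thesis using rq by simp
  qed
  ultimately show False using xy r1 by simp
qed

lemma rs1: "(r * s) mod p = 1"
proof -
  have "r * s = r ^ q" unfolding s_def using q_pos by (metis Suc_diff_1 power_Suc)
  then show ?thesis using rq by simp
qed

lemma s_ord: assumes "0 < c" "c < q" shows "s ^ c mod p \<noteq> 1"
proof -
  have "\<not> q dvd (q - 1)" using q_gt2 by (auto dest: dvd_imp_le)
  moreover have "\<not> q dvd c" using assms by (auto dest: dvd_imp_le)
  ultimately have "\<not> q dvd ((q - 1) * c)" using qp by (simp add: prime_dvd_mult_iff)
  then have "((q - 1) * c) mod q \<noteq> 0" by (simp add: dvd_eq_mod_eq_0)
  then have e: "0 < ((q - 1) * c) mod q" "((q - 1) * c) mod q < q" using q_pos by auto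
  have "s ^ c mod p = r ^ (((q - 1) * c) mod q) mod p"
    unfolding s_def by (simp add: power_mult[symmetric] rpow_mod[symmetric])
  then show ?thesis using r_ord[OF e] by simp
qed

lemma r_ne_s: "r mod p \<noteq> s mod p"
proof
  assume h: "r mod p = s mod p"
  have "(r * r) mod p = (r * s) mod p" using h by (metis mod_mult_right_eq)
  then have "r ^ 2 mod p = 1" using rs1 by (simp add: power2_eq_square)
  then show False using r_ord[of 2] q_gt2 by simp
qed

lemma not_dvd_r_minus_s: "\<not> int p dvd (int r - int s)"
proof
  assume "int p dvd (int r - int s)"
  then have "int r mod int p = int s mod int p" by (simp add: mod_eq_dvd_iff)
  then have "r mod p = s mod p" by (metis of_nat_eq_iff of_nat_mod)
  then show False using r_ne_s by simp
qed

lemma solve_axis: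
  assumes "\<not> p dvd aj"
  shows "\<exists>m0::nat. p dvd (ai + m0 * aj)"
proof -
  have "\<not> int p dvd int aj" using assms by simp
  then obtain m where "int p dvd (int ai + int m * int aj)" using int_solve[OF pp] by blast
  then have "int p dvd int (ai + m * aj)" by simp
  then show ?thesis by (metis int_dvd_int_iff)
qed

lemma solve_generic:
  assumes aj: "\<not> p dvd aj" and bj: "\<not> p dvd bj"
  shows "\<exists>m0 m1::nat. p dvd (ai + m0 * aj + m1 * r * aj) \<and> p dvd (bi + m0 * bj + m1 * s * bj)"
proof -
  have paj: "\<not> int p dvd int aj" using aj by simp
  have pbj: "\<not> int p dvd int bj" using bj by simp
  have "\<not> int p dvd ((int r - int s) * int aj * int bj)"
    using not_dvd_r_minus_s paj pbj pp by (simp add: prime_dvd_mult_iff)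
  then obtain m1 where m1: "int p dvd ((int bj * int ai - int aj * int bi) + int m1 * ((int r - int s) * int aj * int bj))"
    using int_solve[OF pp] by blast
  have "\<not> int p dvd int aj" by (rule paj)
  then obtain m0 where m0: "int p dvd ((int ai + int m1 * int r * int aj) + int m0 * int aj)"
    using int_solve[OF pp] by blast
  define X where "X = int ai + int m0 * int aj + int m1 * int r * int aj"
  define Y where "Y = int bi + int m0 * int bj + int m1 * int s * int bj"
  have X: "int p dvd X" using m0 unfolding X_def by (simp add: algebra_simps)
  have "int aj * Y = int bj * X - ((int bj * int ai - int aj * int bi) + int m1 * ((int r - int s) * int aj * int bj))"
    unfolding X_def Y_def by (simp add: algebra_simps)
  then have "int p dvd int aj * Y" using X m1 by (simp add: dvd_diff)
  then have Y: "int p dvd Y" using paj pp by (simp add: prime_dvd_mult_iff)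
  have "int p dvd int (ai + m0 * aj + m1 * r * aj)" using X unfolding X_def by simp
  moreover have "int p dvd int (bi + m0 * bj + m1 * s * bj)" using Y unfolding Y_def by simp
  ultimately show ?thesis by (metis int_dvd_int_iff)
qed

end

lemma exists_zeta:
  assumes p: "prime p"
  shows "\<exists>z::'k::alg_closed_field_char_0. \<forall>k. z ^ k = 1 \<longleftrightarrow> p dvd k"
proof -
  have p1: "p > 1" using prime_gt_1_nat[OF p] .
  obtain x :: 'k where x: "x ^ (p - 1) + (\<Sum>i<p - 1. 1 * x ^ i) = 0"
    using alg_closed[of "p - 1" "\<lambda>_. 1"] p1 by auto
  have pe: "p = Suc (p - 1)" using p1 by simp
  have "(\<Sum>i<p. x ^ i) = (\<Sum>i<Suc (p - 1). x ^ i)" using pe by simp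
  also have "\<dots> = (\<Sum>i<p - 1. x ^ i) + x ^ (p - 1)" by (rule sum.lessThan_Suc)
  also have "\<dots> = 0" using x by (simp add: add.commute)
  finally have S: "(\<Sum>i<p. x ^ i) = 0" .
  have x1: "x \<noteq> 1"
  proof
    assume "x = 1"
    then have "(of_nat p :: 'k) = 0" using S by simp
    then show False using p1 by simp
  qed
  have xp: "x ^ p = 1"
  proof -
    have "(1 - x ^ p) / (1 - x) = 0" using S x1 sum_gp_strict[of x p] by simp
    then show ?thesis using x1 by simp
  qed
  have pm: "x ^ n = x ^ (n mod p)" for n
    by (metis div_mult_mod_eq power_add power_mult xp power_one mult_1 mult.commute)
  have "x ^ k = 1 \<longleftrightarrow> p dvd k" for k
  proof
    assume "p dvd k" then show "x ^ k = 1" using xp by (auto simp: power_mult)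
  next
    assume xk: "x ^ k = 1"
    show "p dvd k"
    proof (rule ccontr)
      assume nk: "\<not> p dvd k"
      then have "\<not> int p dvd int k" by simp
      then obtain u where "int p dvd (u * int k - 1)" using int_inv_exists[OF p] by blast
      then obtain m where "int p dvd (-1 + int m * int k)" using int_solve[OF p, of "int k" "-1"] \<open>\<not> int p dvd int k\<close> by blast
      then have "int p dvd (int (m * k) - 1)" by simp
      then have "int (m * k) mod int p = 1 mod int p" by (simp add: mod_eq_dvd_iff)
      then have "(m * k) mod p = 1" using p1 by (metis of_nat_eq_iff of_nat_mod of_nat_1 mod_less)
      then have "x ^ (m * k) = x" using pm[of "m * k"] by simp
      moreover have "x ^ (m * k) = 1" using xk by (simp add: power_mult mult.commute)
      ultimately show False using x1 by simp
    qed
  qed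
  then show ?thesis by blast
qed

lemma root_sum:
  fixes w :: "'k::field"
  assumes "w ^ p = 1"
  shows "(\<Sum>x<p. w ^ x) = (if w = 1 then of_nat p else 0)"
  using assms sum_gp_strict[of w p] by simp

lemma sum_delta_right:
  fixes f :: "nat \<Rightarrow> 'a::semiring_0"
  shows "k0 < n \<Longrightarrow> (\<Sum>k<n. f k * (if k = k0 then y k else 0)) = f k0 * y k0"
  by (simp add: if_distrib[of "\<lambda>t. f _ * t"] sum.delta cong: if_cong)

lemma sum_delta_left:
  fixes f :: "nat \<Rightarrow> 'a::semiring_0"
  shows "k0 < n \<Longrightarrow> (\<Sum>k<n. (if k = k0 then y k else 0) * f k) = y k0 * f k0"
  by (simp add: if_distrib[of "\<lambda>t. t * f _"] sum.delta cong: if_cong)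

locale gs = pqr +
  fixes z :: "'k::field_char_0"
  assumes zeta: "\<And>k. z ^ k = 1 \<longleftrightarrow> p dvd k"
begin

lemma z_p: "z ^ p = 1" using zeta by simp

lemma z_mod: "z ^ m = z ^ (m mod p)"
proof -
  have "z ^ m = z ^ (p * (m div p) + m mod p)" by simp
  also have "\<dots> = (z ^ p) ^ (m div p) * z ^ (m mod p)" by (simp only: power_add power_mult)
  finally show ?thesis using z_p by simp
qed

lemma z_nz: "z \<noteq> 0"
  using z_p p_pos by (metis power_0_left zero_neq_one neq0_conv)

lemma z_eq: "z ^ m = z ^ n \<longleftrightarrow> m mod p = n mod p"
proof
  assume "m mod p = n mod p" then show "z ^ m = z ^ n" by (metis z_mod)
next
  assume h: "z ^ m = z ^ n"
  show "m mod p = n mod p"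
  proof (cases "m \<le> n")
    case True
    then have "z ^ n = z ^ m * z ^ (n - m)" by (metis le_add_diff_inverse power_add)
    then have "z ^ (n - m) = 1" using h z_nz by simp
    then have "p dvd n - m" using zeta by simp
    then have "n mod p = m mod p" using mod_eq_dvd_iff_nat[OF True] by blast
    then show ?thesis by simp
  next
    case False
    then have "z ^ m = z ^ n * z ^ (m - n)" by (metis nat_le_linear le_add_diff_inverse power_add)
    then have "z ^ (m - n) = 1" using h z_nz by simp
    then have "p dvd m - n" using zeta by simp
    then show ?thesis using mod_eq_dvd_iff_nat[of n m p] False by simp
  qed
qed

lemma cancel_mod:
  assumes "\<not> p dvd A" "(A * X) mod p = (A * Y) mod p"
  shows "X mod p = Y mod p"
proof -
  have "int p dvd int A * int X - int A * int Y"
    using assms(2) by (metis mod_eq_dvd_iff of_nat_mod of_nat_mult)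
  then have "int p dvd int A * (int X - int Y)" by (simp add: algebra_simps)
  moreover have "\<not> int p dvd int A" using assms(1) by simp
  ultimately have "int p dvd int X - int Y" using pp by (simp add: prime_dvd_mult_iff)
  then show ?thesis by (metis mod_eq_dvd_iff of_nat_eq_iff of_nat_mod)
qed

lemma not_dvd_rpow: "\<not> p dvd r ^ e"
  using not_dvd_r pp prime_dvd_power by blast

definition R :: "nat \<Rightarrow> nat" where "R i = r ^ ((q - 1) * i)"

lemma R_inj: assumes "i < q" "k < q" "R i mod p = R k mod p" shows "i = k"
proof (rule ccontr)
  assume ne: "i \<noteq> k"
  have key: "R a mod p \<noteq> R b mod p" if ab: "a < b" "b < q" for a b
  proof
    assume h: "R a mod p = R b mod p"
    have e: "(q - 1) * b = (q - 1) * a + (q - 1) * (b - a)" using ab by (simp add: add_mult_distrib2[symmetric])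
    have "R b = R a * s ^ (b - a)" unfolding R_def s_def by (simp only: e power_add power_mult)
    then have "(R a * 1) mod p = (R a * s ^ (b - a)) mod p" using h by simp
    then have "1 mod p = s ^ (b - a) mod p" using cancel_mod[OF not_dvd_rpow[of "(q - 1) * a"]] unfolding R_def by blast
    moreover have "0 < b - a" "b - a < q" using ab by auto
    ultimately show False using s_ord[of "b - a"] p_gt2 by simp
  qed
  show False using ne assms key[of i k] key[of k i] by (cases "i < k") auto
qed

abbreviation "G1 \<equiv> sd_carrier p q"
abbreviation "m1 \<equiv> sd_mult p q r r"

definition Wm :: "nat \<Rightarrow> nat \<Rightarrow> nat \<times> nat \<times> nat \<Rightarrow> 'k mat" where
  "Wm \<alpha> \<beta> g = (case g of (x, a, c) \<Rightarrow>
     mat q q (\<lambda>(i, j). if i = (j + c) mod q then z ^ ((\<alpha> * x + \<beta> * a) * R i) else 0))"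

lemma Wm_index: "i < q \<Longrightarrow> j < q \<Longrightarrow> Wm \<alpha> \<beta> (x, a, c) $$ (i, j) = (if i = (j + c) mod q then z ^ ((\<alpha> * x + \<beta> * a) * R i) else 0)"
  by (simp add: Wm_def)

lemma Wm_carrier[simp]: "Wm \<alpha> \<beta> g \<in> carrier_mat q q"
  by (cases g) (simp add: Wm_def)

lemma Wm_dim[simp]: "dim_row (Wm \<alpha> \<beta> g) = q" "dim_col (Wm \<alpha> \<beta> g) = q"
  using carrier_matD[OF Wm_carrier[of \<alpha> \<beta> g]] by auto

lemma exp_key:
  assumes "k0 < q" "i = (k0 + c) mod q"
  shows "(r ^ c * R i) mod p = R k0 mod p"
proof -
  have q1: "q = Suc (q - 1)" using q_pos by simp
  have e1: "(c + (q - 1) * i) mod q = (c + (q - 1) * (k0 + c)) mod q"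
    using assms by (metis mod_add_right_eq mod_mult_right_eq)
  have "c + (q - 1) * (k0 + c) = (q - 1) * k0 + q * c"
  proof -
    obtain Q where Q: "q = Suc Q" using q1 by blast
    show ?thesis unfolding Q by (simp add: algebra_simps)
  qed
  then have e2: "(c + (q - 1) * i) mod q = ((q - 1) * k0) mod q" using e1 by simp
  have "(r ^ c * R i) mod p = r ^ (c + (q - 1) * i) mod p" unfolding R_def by (simp add: power_add)
  also have "\<dots> = r ^ ((c + (q - 1) * i) mod q) mod p" by (rule rpow_mod)
  also have "\<dots> = r ^ (((q - 1) * k0) mod q) mod p" using e2 by simp
  also have "\<dots> = R k0 mod p" unfolding R_def by (rule rpow_mod[symmetric])
  finally show ?thesis .
qed

lemma Wm_mult:
  assumes c: "c < q" and c': "c' < q"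
  shows "Wm \<alpha> \<beta> (m1 (x, a, c) (x', a', c')) = Wm \<alpha> \<beta> (x, a, c) * Wm \<alpha> \<beta> (x', a', c')"
proof (rule eq_matI)
  fix i j assume i: "i < dim_row (Wm \<alpha> \<beta> (x, a, c) * Wm \<alpha> \<beta> (x', a', c'))"
    and j: "j < dim_col (Wm \<alpha> \<beta> (x, a, c) * Wm \<alpha> \<beta> (x', a', c'))"
  then have i: "i < q" and j: "j < q" by auto
  define k0 where "k0 = (j + c') mod q"
  have k0: "k0 < q" unfolding k0_def using q_pos by simp
  define lg where "lg = \<alpha> * x + \<beta> * a"
  define lh where "lh = \<alpha> * x' + \<beta> * a'"
  define lgh where "lgh = \<alpha> * ((x + r ^ c * x') mod p) + \<beta> * ((a + r ^ c * a') mod p)"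
  have "(Wm \<alpha> \<beta> (x, a, c) * Wm \<alpha> \<beta> (x', a', c')) $$ (i, j)
      = (\<Sum>k<q. Wm \<alpha> \<beta> (x, a, c) $$ (i, k) * Wm \<alpha> \<beta> (x', a', c') $$ (k, j))"
    using i j by (simp add: index_mult_mat scalar_prod_def atLeast0LessThan)
  also have "\<dots> = (\<Sum>k<q. Wm \<alpha> \<beta> (x, a, c) $$ (i, k) * (if k = k0 then z ^ (lh * R k) else 0))"
    using j by (intro sum.cong refl) (auto simp: Wm_index k0_def lh_def)
  also have "\<dots> = Wm \<alpha> \<beta> (x, a, c) $$ (i, k0) * z ^ (lh * R k0)"
    by (rule sum_delta_right[OF k0])
  also have "\<dots> = (if i = (k0 + c) mod q then z ^ (lg * R i) * z ^ (lh * R k0) else 0)"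
    using i k0 by (simp add: Wm_index lg_def)
  finally have L: "(Wm \<alpha> \<beta> (x, a, c) * Wm \<alpha> \<beta> (x', a', c')) $$ (i, j) =
      (if i = (k0 + c) mod q then z ^ (lg * R i) * z ^ (lh * R k0) else 0)" .
  have m: "m1 (x, a, c) (x', a', c') = ((x + r ^ c * x') mod p, (a + r ^ c * a') mod p, (c + c') mod q)"
    by (simp add: sd_mult_def)
  have Rt: "Wm \<alpha> \<beta> (m1 (x, a, c) (x', a', c')) $$ (i, j) =
      (if i = (j + (c + c') mod q) mod q then z ^ (lgh * R i) else 0)"
    using i j by (simp add: m Wm_index lgh_def)
  have cond: "(i = (k0 + c) mod q) = (i = (j + (c + c') mod q) mod q)"
    unfolding k0_def by (simp add: mod_simps add.assoc add.commute add.left_commute)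
  have ex: "z ^ (lgh * R i) = z ^ (lg * R i) * z ^ (lh * R k0)" if h: "i = (k0 + c) mod q"
  proof -
    have "lgh mod p = (\<alpha> * (x + r ^ c * x') + \<beta> * (a + r ^ c * a')) mod p"
      unfolding lgh_def by (subst mod_add_eq[symmetric]) (simp only: mod_mult_right_eq mod_add_eq)
    also have "\<dots> = (lg + r ^ c * lh) mod p"
      unfolding lg_def lh_def by (simp add: algebra_simps)
    finally have "lgh mod p = (lg + r ^ c * lh) mod p" .
    then have "(lgh * R i) mod p = ((lg + r ^ c * lh) * R i) mod p" by (metis mod_mult_left_eq)
    also have "\<dots> = (lg * R i + lh * (r ^ c * R i)) mod p" by (simp add: algebra_simps)
    also have "\<dots> = (lg * R i + lh * R k0) mod p"
      using exp_key[OF k0 h] by (intro mod_add_cong refl mod_mult_cong)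
    finally have "z ^ (lgh * R i) = z ^ (lg * R i + lh * R k0)" using z_eq by blast
    then show ?thesis by (simp add: power_add)
  qed
  show "Wm \<alpha> \<beta> (m1 (x, a, c) (x', a', c')) $$ (i, j) = (Wm \<alpha> \<beta> (x, a, c) * Wm \<alpha> \<beta> (x', a', c')) $$ (i, j)"
    using L Rt cond ex by simp
qed auto

lemma Wm_one: "Wm \<alpha> \<beta> sd_one = 1\<^sub>m q"
  by (rule eq_matI) (auto simp: sd_one_def Wm_index)

definition Wobj :: "nat \<Rightarrow> nat \<Rightarrow> (nat \<times> nat \<times> nat, 'k) rep" where
  "Wobj \<alpha> \<beta> = (q, Wm \<alpha> \<beta>)"

lemma W_obj: "Wobj \<alpha> \<beta> \<in> rep_obj G1 m1 sd_one"
  unfolding rep_obj_def Wobj_def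
  by (auto simp: Wm_one sd_carrier_def intro!: Wm_mult)

end

lemma rpow_fst: "fst (rpow X b) = fst X ^ b"
  by (induction b) (auto simp: rep_unit_def rep_tensor_def)

lemma rpow_triv: "snd X g = 1\<^sub>m (fst X) \<Longrightarrow> snd (rpow X b) g = (1\<^sub>m (fst (rpow X b)) :: 'k::field mat)"
  by (induction b) (auto simp: rep_unit_def rep_tensor_def kron_one)

lemma suc_mod_inj: "j < q \<Longrightarrow> l < (q::nat) \<Longrightarrow> Suc j mod q = Suc l mod q \<Longrightarrow> j = l"
proof -
  assume j: "j < q" and l: "l < q" and h: "Suc j mod q = Suc l mod q"
  have e: "Suc k mod q = (if Suc k = q then 0 else Suc k)" if "k < q" for k
    using that by (cases "Suc k = q") auto
  show "j = l" using h e[OF j] e[OF l] j l by (auto split: if_splits)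
qed

context gs
begin

lemma W_simple:
  assumes x0: "x0 < p" and a0: "a0 < p" and one: "\<alpha> * x0 + \<beta> * a0 = 1"
  shows "end_scalar G1 (Wobj \<alpha> \<beta>)"
  unfolding end_scalar_def
proof
  fix T assume T: "T \<in> rep_hom G1 (Wobj \<alpha> \<beta>) (Wobj \<alpha> \<beta>)"
  have Tc: "T \<in> carrier_mat q q" using homD(1)[OF T] by (simp add: Wobj_def)
  have comm: "T * Wm \<alpha> \<beta> g = Wm \<alpha> \<beta> g * T" if "g \<in> G1" for g
    using homD(2)[OF T that] by (simp add: Wobj_def)
  have q1: "1 < q" using q_gt2 by simp
  define D where "D = Wm \<alpha> \<beta> (x0, a0, 0)"
  have D: "D $$ (i, j) = (if i = j then z ^ R i else 0)" if "i < q" "j < q" for i j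
    using that one by (simp add: D_def Wm_index)
  have Dc: "T * D = D * T" using comm[of "(x0, a0, 0)"] x0 a0 q_pos by (simp add: D_def sd_carrier_def)
  have off: "T $$ (i, k) = 0" if ik: "i < q" "k < q" "i \<noteq> k" for i k
  proof -
    have "(T * D) $$ (i, k) = (\<Sum>l<q. T $$ (i, l) * D $$ (l, k))"
      using Tc ik by (simp add: index_mult_mat scalar_prod_def atLeast0LessThan D_def)
    also have "\<dots> = (\<Sum>l<q. T $$ (i, l) * (if l = k then z ^ R l else 0))"
      using ik by (intro sum.cong refl) (simp add: D)
    also have "\<dots> = T $$ (i, k) * z ^ R k" by (rule sum_delta_right[OF ik(2)])
    finally have 1: "(T * D) $$ (i, k) = T $$ (i, k) * z ^ R k" .
    have "(D * T) $$ (i, k) = (\<Sum>l<q. D $$ (i, l) * T $$ (l, k))"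
      using Tc ik by (simp add: index_mult_mat scalar_prod_def atLeast0LessThan D_def)
    also have "\<dots> = (\<Sum>l<q. (if l = i then z ^ R l else 0) * T $$ (l, k))"
      using ik by (intro sum.cong refl) (auto simp: D)
    also have "\<dots> = z ^ R i * T $$ (i, k)" by (rule sum_delta_left[OF ik(1)])
    finally have 2: "(D * T) $$ (i, k) = z ^ R i * T $$ (i, k)" .
    have ne: "z ^ R k \<noteq> z ^ R i" using R_inj[OF ik(1,2)] ik(3) z_eq by metis
    have "(T * D) $$ (i, k) = (D * T) $$ (i, k)" using Dc by simp
    then have "T $$ (i, k) * z ^ R k = z ^ R i * T $$ (i, k)" using 1 2 by simp
    then have "T $$ (i, k) * (z ^ R k - z ^ R i) = 0" by (simp add: algebra_simps)
    moreover have "z ^ R k - z ^ R i \<noteq> 0" using ne by simp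
    ultimately show ?thesis by simp
  qed
  define P where "P = Wm \<alpha> \<beta> (0, 0, 1)"
  have P: "P $$ (i, j) = (if i = (j + 1) mod q then 1 else 0)" if "i < q" "j < q" for i j
    using that by (simp add: P_def Wm_index)
  have Pc: "T * P = P * T" using comm[of "(0, 0, 1)"] q1 p_pos by (simp add: P_def sd_carrier_def)
  have step: "T $$ ((j + 1) mod q, (j + 1) mod q) = T $$ (j, j)" if j: "j < q" for j
  proof -
    define k0 where "k0 = (j + 1) mod q"
    have k0: "k0 < q" using q_pos by (simp add: k0_def)
    have "(T * P) $$ (k0, j) = (\<Sum>l<q. T $$ (k0, l) * P $$ (l, j))"
      using Tc j k0 by (simp add: index_mult_mat scalar_prod_def atLeast0LessThan P_def)
    also have "\<dots> = (\<Sum>l<q. T $$ (k0, l) * (if l = k0 then 1 else 0))"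
      using j by (intro sum.cong refl) (simp add: P k0_def)
    also have "\<dots> = T $$ (k0, k0)" using sum_delta_right[OF k0, of "\<lambda>l. T $$ (k0, l)" "\<lambda>_. 1"] by simp
    finally have 1: "(T * P) $$ (k0, j) = T $$ (k0, k0)" .
    have "(P * T) $$ (k0, j) = (\<Sum>l<q. P $$ (k0, l) * T $$ (l, j))"
      using Tc j k0 by (simp add: index_mult_mat scalar_prod_def atLeast0LessThan P_def)
    also have "\<dots> = (\<Sum>l<q. (if l = j then 1 else 0) * T $$ (l, j))"
      using j k0 suc_mod_inj[OF j] by (intro sum.cong refl) (auto simp: P k0_def)
    also have "\<dots> = T $$ (j, j)" using sum_delta_left[OF j, of "\<lambda>_. 1" "\<lambda>l. T $$ (l, j)"] by simp
    finally have 2: "(P * T) $$ (k0, j) = T $$ (j, j)" .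
    show ?thesis using 1 2 Pc unfolding k0_def by simp
  qed
  have diag: "T $$ (j, j) = T $$ (0, 0)" if "j < q" for j
    using that
  proof (induction j)
    case 0 then show ?case by simp
  next
    case (Suc j)
    then have "T $$ (Suc j, Suc j) = T $$ (j, j)" using step[of j] by simp
    then show ?case using Suc by simp
  qed
  have "T = T $$ (0, 0) \<cdot>\<^sub>m 1\<^sub>m q"
  proof (rule eq_matI)
    fix i j assume "i < dim_row (T $$ (0, 0) \<cdot>\<^sub>m 1\<^sub>m q)" "j < dim_col (T $$ (0, 0) \<cdot>\<^sub>m 1\<^sub>m q)"
    then have ij: "i < q" "j < q" by auto
    show "T $$ (i, j) = (T $$ (0, 0) \<cdot>\<^sub>m 1\<^sub>m q) $$ (i, j)"
    proof (cases "i = j")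
      case True then show ?thesis using ij diag[of j] by simp
    next
      case False then show ?thesis using ij off[of i j] by simp
    qed
  next
    show "dim_row T = dim_row (T $$ (0, 0) \<cdot>\<^sub>m 1\<^sub>m q)" using carrier_matD[OF Tc] by simp
    show "dim_col T = dim_col (T $$ (0, 0) \<cdot>\<^sub>m 1\<^sub>m q)" using carrier_matD[OF Tc] by simp
  qed
  then show "\<exists>c. T = c \<cdot>\<^sub>m 1\<^sub>m (fst (Wobj \<alpha> \<beta>))" by (auto simp: Wobj_def)
qed

lemma W_vanish:
  assumes x0: "x0 < p" and a0: "a0 < p" and dj: "p dvd (\<alpha>j * x0 + \<beta>j * a0)"
    and di: "\<not> p dvd (\<alpha>i * x0 + \<beta>i * a0)"
  shows "hom_zero G1 rep_unit (rep_tensor (Wobj \<alpha>i \<beta>i) (rpow (Wobj \<alpha>j \<beta>j) b))"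
  unfolding hom_zero_def
proof
  fix T assume T: "T \<in> rep_hom G1 rep_unit (rep_tensor (Wobj \<alpha>i \<beta>i) (rpow (Wobj \<alpha>j \<beta>j) b))"
  define N where "N = q ^ b"
  have fN: "fst (rpow (Wobj \<alpha>j \<beta>j) b) = N" by (simp add: rpow_fst Wobj_def N_def)
  have Tc: "T \<in> carrier_mat (q * N) 1" using homD(1)[OF T] fN by (simp add: rep_tensor_def Wobj_def rep_unit_def)
  have v: "(x0, a0, 0) \<in> G1" using x0 a0 q_pos by (simp add: sd_carrier_def)
  have Wj: "Wm \<alpha>j \<beta>j (x0, a0, 0) = 1\<^sub>m q"
  proof (rule eq_matI)
    fix i j assume "i < dim_row (1\<^sub>m q :: 'k mat)" "j < dim_col (1\<^sub>m q :: 'k mat)"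
    then have ij: "i < q" "j < q" by auto
    have "p dvd (\<alpha>j * x0 + \<beta>j * a0) * R i" using dj by simp
    then have "z ^ ((\<alpha>j * x0 + \<beta>j * a0) * R i) = 1" using zeta by simp
    then show "Wm \<alpha>j \<beta>j (x0, a0, 0) $$ (i, j) = (1\<^sub>m q :: 'k mat) $$ (i, j)"
      using ij by (cases "i = j") (simp_all add: Wm_index)
  qed auto
  have Pv: "snd (rpow (Wobj \<alpha>j \<beta>j) b) (x0, a0, 0) = 1\<^sub>m N"
    using rpow_triv[of "Wobj \<alpha>j \<beta>j" "(x0, a0, 0)" b] Wj fN by (simp add: Wobj_def)
  define Di where "Di = Wm \<alpha>i \<beta>i (x0, a0, 0)"
  define d where "d k = z ^ ((\<alpha>i * x0 + \<beta>i * a0) * R k)" for k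
  have Di: "Di $$ (i, j) = (if i = j then d i else 0)" if "i < q" "j < q" for i j
    using that by (simp add: Di_def Wm_index d_def)
  have dne: "d k \<noteq> 1" for k
  proof
    assume "d k = 1"
    then have "p dvd (\<alpha>i * x0 + \<beta>i * a0) * R k" using zeta by (simp add: d_def)
    then show False using di not_dvd_rpow pp unfolding R_def by (simp add: prime_dvd_mult_iff)
  qed
  have eq: "T * 1\<^sub>m 1 = kron Di (1\<^sub>m N) * T"
    using homD(2)[OF T v] Pv by (simp add: rep_tensor_def rep_unit_def Wobj_def Di_def)
  have N0: "N > 0" using q_pos by (simp add: N_def)
  show "T = 0\<^sub>m (fst (rep_tensor (Wobj \<alpha>i \<beta>i) (rpow (Wobj \<alpha>j \<beta>j) b))) (fst (rep_unit :: (nat \<times> nat \<times> nat, 'k) rep))"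
  proof (rule eq_matI)
    fix l k assume "l < dim_row (0\<^sub>m (fst (rep_tensor (Wobj \<alpha>i \<beta>i) (rpow (Wobj \<alpha>j \<beta>j) b))) (fst (rep_unit :: (nat \<times> nat \<times> nat, 'k) rep)) :: 'k mat)"
      "k < dim_col (0\<^sub>m (fst (rep_tensor (Wobj \<alpha>i \<beta>i) (rpow (Wobj \<alpha>j \<beta>j) b))) (fst (rep_unit :: (nat \<times> nat \<times> nat, 'k) rep)) :: 'k mat)"
    then have l: "l < q * N" and k: "k = 0" using fN by (auto simp: rep_tensor_def Wobj_def rep_unit_def)
    have Dc: "Di \<in> carrier_mat q q" by (simp add: Di_def)
    have "(kron Di (1\<^sub>m N) * T) $$ (l, 0) = (\<Sum>m<q * N. kron Di (1\<^sub>m N) $$ (l, m) * T $$ (m, 0))"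
      using Tc l Dc by (simp add: index_mult_mat scalar_prod_def atLeast0LessThan)
    also have "\<dots> = (\<Sum>m<q * N. (if m = l then d (l div N) else 0) * T $$ (m, 0))"
    proof (intro sum.cong refl)
      fix m assume m: "m \<in> {..<q * N}"
      have lm: "l div N < q" "m div N < q" "l mod N < N" "m mod N < N"
        using l m div_lt mod_lt by auto
      have "(l div N = m div N \<and> l mod N = m mod N) = (l = m)" by (metis div_mult_mod_eq)
      then show "kron Di (1\<^sub>m N) $$ (l, m) * T $$ (m, 0) = (if m = l then d (l div N) else 0) * T $$ (m, 0)"
        using lm l m Dc by (auto simp: kron_index Di)
    qed
    also have "\<dots> = d (l div N) * T $$ (l, 0)" by (rule sum_delta_left[OF l])
    finally have 1: "(kron Di (1\<^sub>m N) * T) $$ (l, 0) = d (l div N) * T $$ (l, 0)" .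
    have "(T * 1\<^sub>m 1) $$ (l, 0) = T $$ (l, 0)" using Tc l by simp
    then have "T $$ (l, 0) = d (l div N) * T $$ (l, 0)" using 1 eq by simp
    then have "(1 - d (l div N)) * T $$ (l, 0) = 0" by (simp add: algebra_simps)
    then show "T $$ (l, k) = 0\<^sub>m (fst (rep_tensor (Wobj \<alpha>i \<beta>i) (rpow (Wobj \<alpha>j \<beta>j) b))) (fst (rep_unit :: (nat \<times> nat \<times> nat, 'k) rep)) $$ (l, k)"
      using dne[of "l div N"] k l fN by (simp add: rep_tensor_def Wobj_def rep_unit_def)
  qed (use Tc fN in \<open>auto simp: rep_tensor_def Wobj_def rep_unit_def\<close>)
qed

definition sw :: "nat \<Rightarrow> nat" where "sw i = (i mod q) * q + i div q"

lemma sw_facts: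
  assumes i: "i < q * q"
  shows "sw i < q * q" "sw i div q = i mod q" "sw i mod q = i div q" "sw (sw i) = i"
proof -
  have q0: "q > 0" using q_pos .
  have a: "i mod q < q" "i div q < q" using i q0 div_lt by auto
  show 1: "sw i div q = i mod q" unfolding sw_def using a q0 by simp
  show 2: "sw i mod q = i div q" unfolding sw_def using a q0 by simp
  have "sw i < (i mod q + 1) * q" unfolding sw_def using a by simp
  also have "\<dots> \<le> q * q"
  proof -
    have "i mod q + 1 \<le> q" using a(1) by (simp add: Suc_le_eq)
    then show ?thesis by (rule mult_right_mono) simp
  qed
  finally show "sw i < q * q" .
  show "sw (sw i) = i" unfolding sw_def[of "sw i"] using 1 2 by (simp add: add.commute mult.commute)
qed

definition Sm :: "'k mat" where "Sm = mat (q * q) (q * q) (\<lambda>(i, j). if j = sw i then 1 else 0)"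

lemma Sm_carrier: "Sm \<in> carrier_mat (q * q) (q * q)" by (simp add: Sm_def)

lemma swap_comm:
  assumes A: "A \<in> carrier_mat q q"
  shows "Sm * kron A A = kron A A * Sm"
proof (rule eq_matI)
  fix i j assume "i < dim_row (kron A A * Sm)" "j < dim_col (kron A A * Sm)"
  then have i: "i < q * q" and j: "j < q * q" using A by (auto simp: Sm_def)
  have "(Sm * kron A A) $$ (i, j) = (\<Sum>l<q * q. Sm $$ (i, l) * kron A A $$ (l, j))"
    using A i j by (simp add: index_mult_mat scalar_prod_def atLeast0LessThan Sm_def)
  also have "\<dots> = (\<Sum>l<q * q. (if l = sw i then 1 else 0) * kron A A $$ (l, j))"
    using i by (intro sum.cong refl) (auto simp: Sm_def)
  also have "\<dots> = kron A A $$ (sw i, j)"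
    using sum_delta_left[OF sw_facts(1)[OF i], of "\<lambda>_. 1" "\<lambda>l. kron A A $$ (l, j)"] by simp
  also have "\<dots> = A $$ (i mod q, j div q) * A $$ (i div q, j mod q)"
    using A i j sw_facts[OF i] by (simp add: kron_index)
  finally have 1: "(Sm * kron A A) $$ (i, j) = A $$ (i mod q, j div q) * A $$ (i div q, j mod q)" .
  have "(kron A A * Sm) $$ (i, j) = (\<Sum>l<q * q. kron A A $$ (i, l) * Sm $$ (l, j))"
    using A i j by (simp add: index_mult_mat scalar_prod_def atLeast0LessThan Sm_def)
  also have "\<dots> = (\<Sum>l<q * q. kron A A $$ (i, l) * (if l = sw j then 1 else 0))"
    using j sw_facts by (intro sum.cong refl) (auto simp: Sm_def)
  also have "\<dots> = kron A A $$ (i, sw j)"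
    using sum_delta_right[OF sw_facts(1)[OF j], of "\<lambda>l. kron A A $$ (i, l)" "\<lambda>_. 1"] by simp
  also have "\<dots> = A $$ (i div q, j mod q) * A $$ (i mod q, j div q)"
    using A i j sw_facts[OF j] by (simp add: kron_index)
  finally have 2: "(kron A A * Sm) $$ (i, j) = A $$ (i div q, j mod q) * A $$ (i mod q, j div q)" .
  show "(Sm * kron A A) $$ (i, j) = (kron A A * Sm) $$ (i, j)" using 1 2 by (simp add: mult.commute)
qed (use A in \<open>auto simp: Sm_def\<close>)

lemma W_not_invertible: "\<not> end_scalar G1 (rep_tensor (Wobj \<alpha> \<beta>) (Wobj \<alpha> \<beta>))"
proof
  assume h: "end_scalar G1 (rep_tensor (Wobj \<alpha> \<beta>) (Wobj \<alpha> \<beta>))"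
  have Sh: "Sm \<in> rep_hom G1 (rep_tensor (Wobj \<alpha> \<beta>) (Wobj \<alpha> \<beta>)) (rep_tensor (Wobj \<alpha> \<beta>) (Wobj \<alpha> \<beta>))"
    by (rule homI) (auto simp: rep_tensor_def Wobj_def Sm_carrier intro!: swap_comm)
  then obtain c where c: "Sm = c \<cdot>\<^sub>m 1\<^sub>m (q * q)" using h unfolding end_scalar_def by (auto simp: rep_tensor_def Wobj_def)
  have q1: "1 < q" using q_gt2 by simp
  have lt: "0 < q * q" "1 < q * q" "q < q * q" using q1 by (auto intro: less_le_trans[of _ q])
  have "sw 0 = 0" by (simp add: sw_def)
  then have "Sm $$ (0, 0) = 1" unfolding Sm_def using lt(1) by (subst index_mat) auto
  then have c1: "c = 1" using c lt by simp
  have "sw 1 = q" using q1 by (simp add: sw_def)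
  then have "Sm $$ (1, q) = 1" unfolding Sm_def using lt(2) lt(3) by (subst index_mat) auto
  then show False using c c1 lt q1 by simp
qed

end

lemma sum_shift_mod:
  fixes h :: "nat \<Rightarrow> 'a::comm_monoid_add"
  assumes n: "n > 0"
  shows "(\<Sum>x<n. h ((x0 + x) mod n)) = (\<Sum>x<n. h x)"
proof -
  have inj: "inj_on (\<lambda>x. (x0 + x) mod n) {..<n}"
  proof (rule inj_onI)
    fix x y assume x: "x \<in> {..<n}" and y: "y \<in> {..<n}" and e: "(x0 + x) mod n = (x0 + y) mod n"
    then have "int ((x0 + x) mod n) = int ((x0 + y) mod n)" by simp
    then have "(int x0 + int x) mod int n = (int x0 + int y) mod int n" by (simp add: of_nat_mod)
    then have "int n dvd (int x0 + int x) - (int x0 + int y)" by (simp only: mod_eq_dvd_iff)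
    then have "int n dvd int x - int y" by simp
    then have "int x mod int n = int y mod int n" by (simp add: mod_eq_dvd_iff)
    then have "int (x mod n) = int (y mod n)" by (simp add: of_nat_mod)
    then show "x = y" using x y by simp
  qed
  have "(\<lambda>x. (x0 + x) mod n) ` {..<n} = {..<n}"
    by (rule endo_inj_surj) (use n inj in auto)
  then have "bij_betw (\<lambda>x. (x0 + x) mod n) {..<n} {..<n}" using inj by (simp add: bij_betw_def)
  then show ?thesis by (rule sum.reindex_bij_betw)
qed

definition vsum :: "nat \<Rightarrow> (nat \<Rightarrow> 'k::field mat) \<Rightarrow> nat \<Rightarrow> 'k mat" where
  "vsum N f C = mat N 1 (\<lambda>(l, _). \<Sum>c<C. f c $$ (l, 0))"

lemma vsum_carrier[simp]: "vsum N f C \<in> carrier_mat N 1" by (simp add: vsum_def)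

lemma mult_vsum:
  assumes A: "A \<in> carrier_mat N' N" and f: "\<And>c. c < C \<Longrightarrow> f c \<in> carrier_mat N 1"
  shows "A * vsum N f C = vsum N' (\<lambda>c. A * f c) C"
proof (rule eq_matI)
  fix i j assume "i < dim_row (vsum N' (\<lambda>c. A * f c) C)" "j < dim_col (vsum N' (\<lambda>c. A * f c) C)"
  then have i: "i < N'" and j: "j = 0" by (auto simp: vsum_def)
  have "(A * vsum N f C) $$ (i, 0) = (\<Sum>k<N. A $$ (i, k) * (\<Sum>c<C. f c $$ (k, 0)))"
    using A i by (simp add: index_mult_mat scalar_prod_def atLeast0LessThan vsum_def)
  also have "\<dots> = (\<Sum>c<C. \<Sum>k<N. A $$ (i, k) * f c $$ (k, 0))"
    by (simp add: sum_distrib_left sum.swap[of _ "{..<C}"])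
  also have "\<dots> = (\<Sum>c<C. (A * f c) $$ (i, 0))"
  proof (intro sum.cong refl)
    fix c assume "c \<in> {..<C}"
    then have fc: "f c \<in> carrier_mat N 1" using f by simp
    show "(\<Sum>k<N. A $$ (i, k) * f c $$ (k, 0)) = (A * f c) $$ (i, 0)"
      using A i carrier_matD[OF fc] by (simp add: index_mult_mat scalar_prod_def atLeast0LessThan)
  qed
  finally show "(A * vsum N f C) $$ (i, j) = vsum N' (\<lambda>c. A * f c) C $$ (i, j)"
    using i j by (simp add: vsum_def)
qed (use A in \<open>auto simp: vsum_def\<close>)

context gs
begin

abbreviation "G2 \<equiv> sd_carrier p q"
abbreviation "m2 \<equiv> sd_mult p q r s"

lemma m2_eq: "m2 (x, a, c) (x', a', c') = ((x + s ^ c * x') mod p, (a + r ^ c * a') mod p, (c + c') mod q)"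
  by (simp add: sd_mult_def)

lemma inG2: "x < p \<Longrightarrow> a < p \<Longrightarrow> c < q \<Longrightarrow> (x, a, c) \<in> G2"
  by (simp add: sd_carrier_def)

lemma sr_pow: "(s ^ c * r ^ c) mod p = 1"
proof -
  have "(s ^ c * r ^ c) mod p = ((r * s) mod p) ^ c mod p" by (simp add: power_mod power_mult_distrib mult.commute)
  then show ?thesis using rs1 p_gt2 by simp
qed

lemma rs_pow: "(r ^ c * s ^ c) mod p = 1" using sr_pow by (simp add: mult.commute)

context
  fixes X :: "(nat \<times> nat \<times> nat, 'k) rep"
  assumes X: "X \<in> rep_obj G2 m2 sd_one"
begin

lemma GL_carrier: "x < p \<Longrightarrow> a < p \<Longrightarrow> c < q \<Longrightarrow> snd X (x, a, c) \<in> carrier_mat (fst X) (fst X)"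
  using obj_carrier[OF X inG2] .

lemma GL1: "x < p \<Longrightarrow> a < p \<Longrightarrow> c < q \<Longrightarrow> snd X (x, a, c) = snd X (x, a, 0) * snd X (0, 0, c)"
  using obj_mult[OF X inG2[of x a 0] inG2[of 0 0 c]] q_pos by (simp add: m2_eq)

lemma GL2: "c0 < q \<Longrightarrow> c < q \<Longrightarrow> snd X (0, 0, c0) * snd X (0, 0, c) = snd X (0, 0, (c0 + c) mod q)"
  using obj_mult[OF X inG2[of 0 0 c0] inG2[of 0 0 c]] p_pos by (simp add: m2_eq)

lemma GL3:
  assumes "x < p" "a < p" "c < q"
  shows "snd X (x, a, 0) * snd X (0, 0, c) = snd X (0, 0, c) * snd X ((r ^ c * x) mod p, (s ^ c * a) mod p, 0)"
proof -
  have "snd X (x, a, 0) * snd X (0, 0, c) = snd X (x, a, c)"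
    by (rule GL1[OF assms, symmetric])
  moreover have "snd X (0, 0, c) * snd X ((r ^ c * x) mod p, (s ^ c * a) mod p, 0) = snd X (m2 (0, 0, c) ((r ^ c * x) mod p, (s ^ c * a) mod p, 0))"
    using obj_mult[OF X inG2[of 0 0 c] inG2[of "(r ^ c * x) mod p" "(s ^ c * a) mod p" 0]] assms p_pos q_pos by simp
  moreover have "m2 (0, 0, c) ((r ^ c * x) mod p, (s ^ c * a) mod p, 0) = (x, a, c)"
  proof -
    have "(s ^ c * ((r ^ c * x) mod p)) mod p = ((s ^ c * r ^ c) mod p * x) mod p"
      by (simp add: mod_mult_right_eq mod_mult_left_eq mult.assoc)
    also have "\<dots> = x" using sr_pow assms by simp
    finally have 1: "(s ^ c * ((r ^ c * x) mod p)) mod p = x" .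
    have "(r ^ c * ((s ^ c * a) mod p)) mod p = ((r ^ c * s ^ c) mod p * a) mod p"
      by (simp add: mod_mult_right_eq mod_mult_left_eq mult.assoc)
    also have "\<dots> = a" using rs_pow assms by simp
    finally have 2: "(r ^ c * ((s ^ c * a) mod p)) mod p = a" .
    show ?thesis using 1 2 assms by (simp add: m2_eq)
  qed
  ultimately show ?thesis by simp
qed

lemma GL4: "x0 < p \<Longrightarrow> a0 < p \<Longrightarrow> x < p \<Longrightarrow> a < p \<Longrightarrow>
    snd X (x0, a0, 0) * snd X (x, a, 0) = snd X ((x0 + x) mod p, (a0 + a) mod p, 0)"
  using obj_mult[OF X inG2[of x0 a0 0] inG2[of x a 0]] q_pos by (simp add: m2_eq)

lemma GL_one: "snd X (0, 0, 0) = 1\<^sub>m (fst X)"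
  using obj_one[OF X] by (simp add: sd_one_def)

end

definition wv :: "(nat \<times> nat \<times> nat, 'k) rep \<Rightarrow> nat \<Rightarrow> nat \<Rightarrow> 'k mat \<Rightarrow> bool" where
  "wv X \<alpha> \<beta> u \<longleftrightarrow> u \<in> carrier_mat (fst X) 1 \<and>
     (\<forall>x<p. \<forall>a<p. snd X (x, a, 0) * u = z ^ (\<alpha> * x + \<beta> * a) \<cdot>\<^sub>m u)"

lemma z_lin_mod: "z ^ (\<alpha> * (x mod p) + \<beta> * (a mod p)) = z ^ (\<alpha> * x + \<beta> * a)"
proof -
  have "(\<alpha> * (x mod p) + \<beta> * (a mod p)) mod p = (\<alpha> * x + \<beta> * a) mod p"
    by (subst mod_add_eq[symmetric]) (simp only: mod_mult_right_eq mod_add_eq)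
  then show ?thesis using z_eq by blast
qed

lemma wv_shift:
  assumes X: "X \<in> rep_obj G2 m2 sd_one" and u: "wv X \<alpha> \<beta> u" and c: "c < q"
  shows "wv X (\<alpha> * r ^ c) (\<beta> * s ^ c) (snd X (0, 0, c) * u)"
  unfolding wv_def
proof (intro conjI allI impI)
  have uc: "u \<in> carrier_mat (fst X) 1" using u by (simp add: wv_def)
  show "snd X (0, 0, c) * u \<in> carrier_mat (fst X) 1"
    using GL_carrier[OF X p_pos p_pos c] uc by simp
  fix x a assume x: "x < p" and a: "a < p"
  have x': "(r ^ c * x) mod p < p" "(s ^ c * a) mod p < p" using p_pos by auto
  have "snd X (x, a, 0) * (snd X (0, 0, c) * u) = (snd X (x, a, 0) * snd X (0, 0, c)) * u"
    using GL_carrier[OF X x a q_pos] GL_carrier[OF X p_pos p_pos c] uc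
    by (rule assoc_mult_mat[symmetric])
  also have "\<dots> = (snd X (0, 0, c) * snd X ((r ^ c * x) mod p, (s ^ c * a) mod p, 0)) * u"
    using GL3[OF X x a c] by simp
  also have "\<dots> = snd X (0, 0, c) * (snd X ((r ^ c * x) mod p, (s ^ c * a) mod p, 0) * u)"
    using GL_carrier[OF X p_pos p_pos c] GL_carrier[OF X x'(1) x'(2) q_pos] uc
    by (rule assoc_mult_mat)
  also have "\<dots> = snd X (0, 0, c) * (z ^ (\<alpha> * ((r ^ c * x) mod p) + \<beta> * ((s ^ c * a) mod p)) \<cdot>\<^sub>m u)"
    using u x' unfolding wv_def by simp
  also have "\<dots> = z ^ (\<alpha> * (r ^ c * x) + \<beta> * (s ^ c * a)) \<cdot>\<^sub>m (snd X (0, 0, c) * u)"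
    using GL_carrier[OF X p_pos p_pos c] uc z_lin_mod by (simp add: mult_smult_distrib)
  finally show "snd X (x, a, 0) * (snd X (0, 0, c) * u) = z ^ (\<alpha> * r ^ c * x + \<beta> * s ^ c * a) \<cdot>\<^sub>m (snd X (0, 0, c) * u)"
    by (simp add: mult.assoc)
qed

end

lemma sum_swap3: "(\<Sum>j\<in>J. \<Sum>x\<in>A. \<Sum>a\<in>B. F j x a) = (\<Sum>x\<in>A. \<Sum>a\<in>B. \<Sum>j\<in>J. (F j x a :: 'a::comm_monoid_add))"
proof -
  have "(\<Sum>j\<in>J. \<Sum>x\<in>A. \<Sum>a\<in>B. F j x a) = (\<Sum>x\<in>A. \<Sum>j\<in>J. \<Sum>a\<in>B. F j x a)" by (rule sum.swap)
  also have "\<dots> = (\<Sum>x\<in>A. \<Sum>a\<in>B. \<Sum>j\<in>J. F j x a)" by (intro sum.cong refl sum.swap)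
  finally show ?thesis .
qed

context gs
begin

lemma omega_sum: "(\<Sum>x<p. (z ^ \<gamma> * inverse (z ^ \<alpha>)) ^ x) = (if \<gamma> mod p = \<alpha> mod p then of_nat p else 0)"
proof -
  have zp: "(z ^ \<gamma> * inverse (z ^ \<alpha>)) ^ p = 1"
  proof -
    have "(z ^ \<gamma> * inverse (z ^ \<alpha>)) ^ p = (z ^ p) ^ \<gamma> * inverse ((z ^ p) ^ \<alpha>)"
      by (simp add: power_mult_distrib power_inverse power_mult[symmetric] mult.commute)
    then show ?thesis using z_p by simp
  qed
  have "(z ^ \<gamma> * inverse (z ^ \<alpha>) = 1) = (z ^ \<gamma> = z ^ \<alpha>)" using z_nz by (auto simp: field_simps)
  then have "(z ^ \<gamma> * inverse (z ^ \<alpha>) = 1) = (\<gamma> mod p = \<alpha> mod p)" using z_eq by simp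
  then show ?thesis using root_sum[OF zp] by simp
qed

lemma term_eq: "inverse (z ^ (\<alpha> * x + \<beta> * a)) * z ^ (\<gamma> * x + \<delta> * a) =
    (z ^ \<gamma> * inverse (z ^ \<alpha>)) ^ x * (z ^ \<delta> * inverse (z ^ \<beta>)) ^ a"
  by (simp add: power_add power_mult_distrib power_inverse power_mult[symmetric] mult.commute mult.left_commute)

lemma char_sum: "(\<Sum>x<p. \<Sum>a<p. inverse (z ^ (\<alpha> * x + \<beta> * a)) * z ^ (\<gamma> * x + \<delta> * a)) =
    (if \<gamma> mod p = \<alpha> mod p \<and> \<delta> mod p = \<beta> mod p then of_nat (p * p) else 0)"
proof -
  have "(\<Sum>x<p. \<Sum>a<p. inverse (z ^ (\<alpha> * x + \<beta> * a)) * z ^ (\<gamma> * x + \<delta> * a)) =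
      (\<Sum>x<p. \<Sum>a<p. (z ^ \<gamma> * inverse (z ^ \<alpha>)) ^ x * (z ^ \<delta> * inverse (z ^ \<beta>)) ^ a)"
    by (simp add: term_eq)
  also have "\<dots> = (\<Sum>x<p. (z ^ \<gamma> * inverse (z ^ \<alpha>)) ^ x) * (\<Sum>a<p. (z ^ \<delta> * inverse (z ^ \<beta>)) ^ a)"
    by (simp add: sum_product)
  finally show ?thesis by (simp add: omega_sum)
qed

definition Pm :: "(nat \<times> nat \<times> nat, 'k) rep \<Rightarrow> nat \<Rightarrow> nat \<Rightarrow> 'k mat" where
  "Pm X \<alpha> \<beta> = mat (fst X) (fst X) (\<lambda>(i, j). \<Sum>x<p. \<Sum>a<p. inverse (z ^ (\<alpha> * x + \<beta> * a)) * snd X (x, a, 0) $$ (i, j))"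

lemma Pm_carrier[simp]: "Pm X \<alpha> \<beta> \<in> carrier_mat (fst X) (fst X)" by (simp add: Pm_def)

lemma Pm_apply:
  assumes X: "X \<in> rep_obj G2 m2 sd_one" and u: "wv X \<gamma> \<delta> u"
  shows "Pm X \<alpha> \<beta> * u = (if \<gamma> mod p = \<alpha> mod p \<and> \<delta> mod p = \<beta> mod p then of_nat (p * p) else 0) \<cdot>\<^sub>m u"
proof (rule eq_matI)
  have uc: "u \<in> carrier_mat (fst X) 1" using u by (simp add: wv_def)
  fix i j assume "i < dim_row ((if \<gamma> mod p = \<alpha> mod p \<and> \<delta> mod p = \<beta> mod p then of_nat (p * p) else 0) \<cdot>\<^sub>m u)"
    "j < dim_col ((if \<gamma> mod p = \<alpha> mod p \<and> \<delta> mod p = \<beta> mod p then of_nat (p * p) else 0) \<cdot>\<^sub>m u)"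
  then have i: "i < fst X" and j: "j = 0" using uc by auto
  define n where "n = fst X"
  have "(Pm X \<alpha> \<beta> * u) $$ (i, 0) = (\<Sum>k<n. (\<Sum>x<p. \<Sum>a<p. inverse (z ^ (\<alpha> * x + \<beta> * a)) * snd X (x, a, 0) $$ (i, k)) * u $$ (k, 0))"
    using i uc by (simp add: index_mult_mat scalar_prod_def atLeast0LessThan Pm_def n_def)
  also have "\<dots> = (\<Sum>k<n. \<Sum>x<p. \<Sum>a<p. inverse (z ^ (\<alpha> * x + \<beta> * a)) * (snd X (x, a, 0) $$ (i, k) * u $$ (k, 0)))"
    by (simp add: sum_distrib_right mult.assoc)
  also have "\<dots> = (\<Sum>x<p. \<Sum>a<p. \<Sum>k<n. inverse (z ^ (\<alpha> * x + \<beta> * a)) * (snd X (x, a, 0) $$ (i, k) * u $$ (k, 0)))"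
    by (rule sum_swap3)
  also have "\<dots> = (\<Sum>x<p. \<Sum>a<p. inverse (z ^ (\<alpha> * x + \<beta> * a)) * (snd X (x, a, 0) * u) $$ (i, 0))"
  proof (intro sum.cong refl)
    fix x a assume x: "x \<in> {..<p}" and a: "a \<in> {..<p}"
    have c: "snd X (x, a, 0) \<in> carrier_mat n n" using GL_carrier[OF X _ _ q_pos] x a by (simp add: n_def)
    show "(\<Sum>k<n. inverse (z ^ (\<alpha> * x + \<beta> * a)) * (snd X (x, a, 0) $$ (i, k) * u $$ (k, 0))) =
        inverse (z ^ (\<alpha> * x + \<beta> * a)) * (snd X (x, a, 0) * u) $$ (i, 0)"
      using c uc i by (simp add: index_mult_mat scalar_prod_def atLeast0LessThan sum_distrib_left n_def)
  qed
  also have "\<dots> = (\<Sum>x<p. \<Sum>a<p. inverse (z ^ (\<alpha> * x + \<beta> * a)) * z ^ (\<gamma> * x + \<delta> * a) * u $$ (i, 0))"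
  proof (intro sum.cong refl)
    fix x a assume x: "x \<in> {..<p}" and a: "a \<in> {..<p}"
    then have "snd X (x, a, 0) * u = z ^ (\<gamma> * x + \<delta> * a) \<cdot>\<^sub>m u" using u unfolding wv_def by simp
    then show "inverse (z ^ (\<alpha> * x + \<beta> * a)) * (snd X (x, a, 0) * u) $$ (i, 0) =
        inverse (z ^ (\<alpha> * x + \<beta> * a)) * z ^ (\<gamma> * x + \<delta> * a) * u $$ (i, 0)"
      using i carrier_matD[OF uc] by simp
  qed
  also have "\<dots> = (\<Sum>x<p. \<Sum>a<p. inverse (z ^ (\<alpha> * x + \<beta> * a)) * z ^ (\<gamma> * x + \<delta> * a)) * u $$ (i, 0)"
    by (simp add: sum_distrib_right)
  also have "\<dots> = (if \<gamma> mod p = \<alpha> mod p \<and> \<delta> mod p = \<beta> mod p then of_nat (p * p) else 0) * u $$ (i, 0)"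
    by (simp only: char_sum)
  finally show "(Pm X \<alpha> \<beta> * u) $$ (i, j) = ((if \<gamma> mod p = \<alpha> mod p \<and> \<delta> mod p = \<beta> mod p then of_nat (p * p) else 0) \<cdot>\<^sub>m u) $$ (i, j)"
    using i j uc by simp
qed (use u in \<open>auto simp: wv_def Pm_def\<close>)

end

context gs
begin

lemma Pm_shift:
  assumes X: "X \<in> rep_obj G2 m2 sd_one" and x0: "x0 < p" and a0: "a0 < p"
  shows "snd X (x0, a0, 0) * Pm X \<alpha> \<beta> = z ^ (\<alpha> * x0 + \<beta> * a0) \<cdot>\<^sub>m Pm X \<alpha> \<beta>"
proof (rule eq_matI)
  define n where "n = fst X"
  have c0: "snd X (x0, a0, 0) \<in> carrier_mat n n" using GL_carrier[OF X x0 a0 q_pos] by (simp add: n_def)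
  fix i j assume "i < dim_row (z ^ (\<alpha> * x0 + \<beta> * a0) \<cdot>\<^sub>m Pm X \<alpha> \<beta>)" "j < dim_col (z ^ (\<alpha> * x0 + \<beta> * a0) \<cdot>\<^sub>m Pm X \<alpha> \<beta>)"
  then have i: "i < n" and j: "j < n" by (auto simp: n_def Pm_def)
  define c where "c x a = inverse (z ^ (\<alpha> * x + \<beta> * a))" for x a
  define H where "H x a = c x a * snd X (x, a, 0) $$ (i, j)" for x a
  have "(snd X (x0, a0, 0) * Pm X \<alpha> \<beta>) $$ (i, j) = (\<Sum>k<n. snd X (x0, a0, 0) $$ (i, k) * (\<Sum>x<p. \<Sum>a<p. c x a * snd X (x, a, 0) $$ (k, j)))"
    using i j c0 by (simp add: index_mult_mat scalar_prod_def atLeast0LessThan Pm_def n_def c_def)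
  also have "\<dots> = (\<Sum>k<n. \<Sum>x<p. \<Sum>a<p. c x a * (snd X (x0, a0, 0) $$ (i, k) * snd X (x, a, 0) $$ (k, j)))"
    by (simp add: sum_distrib_left mult_ac)
  also have "\<dots> = (\<Sum>x<p. \<Sum>a<p. \<Sum>k<n. c x a * (snd X (x0, a0, 0) $$ (i, k) * snd X (x, a, 0) $$ (k, j)))"
    by (rule sum_swap3)
  also have "\<dots> = (\<Sum>x<p. \<Sum>a<p. c x a * snd X ((x0 + x) mod p, (a0 + a) mod p, 0) $$ (i, j))"
  proof (intro sum.cong refl)
    fix x a assume x: "x \<in> {..<p}" and a: "a \<in> {..<p}"
    have cx: "snd X (x, a, 0) \<in> carrier_mat n n" using GL_carrier[OF X _ _ q_pos] x a by (simp add: n_def)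
    have "(snd X (x0, a0, 0) * snd X (x, a, 0)) $$ (i, j) = (\<Sum>k<n. snd X (x0, a0, 0) $$ (i, k) * snd X (x, a, 0) $$ (k, j))"
      using c0 cx i j by (simp add: index_mult_mat scalar_prod_def atLeast0LessThan)
    moreover have "snd X (x0, a0, 0) * snd X (x, a, 0) = snd X ((x0 + x) mod p, (a0 + a) mod p, 0)"
      using GL4[OF X x0 a0] x a by simp
    ultimately show "(\<Sum>k<n. c x a * (snd X (x0, a0, 0) $$ (i, k) * snd X (x, a, 0) $$ (k, j))) =
        c x a * snd X ((x0 + x) mod p, (a0 + a) mod p, 0) $$ (i, j)"
      by (simp add: sum_distrib_left)
  qed
  also have "\<dots> = (\<Sum>x<p. \<Sum>a<p. z ^ (\<alpha> * x0 + \<beta> * a0) * H ((x0 + x) mod p) ((a0 + a) mod p))"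
  proof (intro sum.cong refl)
    fix x a
    have "z ^ (\<alpha> * ((x0 + x) mod p) + \<beta> * ((a0 + a) mod p)) = z ^ (\<alpha> * (x0 + x) + \<beta> * (a0 + a))"
      by (rule z_lin_mod)
    also have "\<dots> = z ^ (\<alpha> * x0 + \<beta> * a0) * z ^ (\<alpha> * x + \<beta> * a)"
      by (simp add: power_add[symmetric] algebra_simps)
    finally have e: "z ^ (\<alpha> * ((x0 + x) mod p) + \<beta> * ((a0 + a) mod p)) = z ^ (\<alpha> * x0 + \<beta> * a0) * z ^ (\<alpha> * x + \<beta> * a)" .
    have "c x a = z ^ (\<alpha> * x0 + \<beta> * a0) * c ((x0 + x) mod p) ((a0 + a) mod p)"
      unfolding c_def e using z_nz by (simp add: field_simps)
    then show "c x a * snd X ((x0 + x) mod p, (a0 + a) mod p, 0) $$ (i, j) =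
        z ^ (\<alpha> * x0 + \<beta> * a0) * H ((x0 + x) mod p) ((a0 + a) mod p)"
      unfolding H_def by simp
  qed
  also have "\<dots> = z ^ (\<alpha> * x0 + \<beta> * a0) * (\<Sum>x<p. \<Sum>a<p. H ((x0 + x) mod p) ((a0 + a) mod p))"
    by (simp add: sum_distrib_left)
  also have "(\<Sum>x<p. \<Sum>a<p. H ((x0 + x) mod p) ((a0 + a) mod p)) = (\<Sum>x<p. \<Sum>a<p. H x a)"
  proof -
    have "(\<Sum>x<p. \<Sum>a<p. H ((x0 + x) mod p) ((a0 + a) mod p)) = (\<Sum>x<p. \<Sum>a<p. H ((x0 + x) mod p) a)"
      by (intro sum.cong refl sum_shift_mod[OF p_pos])
    also have "\<dots> = (\<Sum>x<p. \<Sum>a<p. H x a)"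
      by (rule sum_shift_mod[OF p_pos, of "\<lambda>x. \<Sum>a<p. H x a"])
    finally show ?thesis .
  qed
  finally show "(snd X (x0, a0, 0) * Pm X \<alpha> \<beta>) $$ (i, j) = (z ^ (\<alpha> * x0 + \<beta> * a0) \<cdot>\<^sub>m Pm X \<alpha> \<beta>) $$ (i, j)"
    using i j by (simp add: Pm_def H_def c_def n_def)
qed (use GL_carrier[OF X x0 a0 q_pos] in \<open>auto simp: Pm_def\<close>)

lemma fourier:
  assumes X: "X \<in> rep_obj G2 m2 sd_one"
    and h: "\<And>\<alpha> \<beta>. \<alpha> < p \<Longrightarrow> \<beta> < p \<Longrightarrow> (\<alpha>, \<beta>) \<noteq> (0, 0) \<Longrightarrow> Pm X \<alpha> \<beta> = 0\<^sub>m (fst X) (fst X)"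
    and x0: "x0 < p" and a0: "a0 < p"
  shows "snd X (x0, a0, 0) = 1\<^sub>m (fst X)"
proof (rule eq_matI)
  define n where "n = fst X"
  fix i j assume "i < dim_row (1\<^sub>m (fst X) :: 'k mat)" "j < dim_col (1\<^sub>m (fst X) :: 'k mat)"
  then have i: "i < n" and j: "j < n" by (auto simp: n_def)
  define f where "f x a = snd X (x, a, 0) $$ (i, j)" for x a
  define F where "F \<alpha> \<beta> = (\<Sum>x<p. \<Sum>a<p. inverse (z ^ (\<alpha> * x + \<beta> * a)) * f x a)" for \<alpha> \<beta>
  have FP: "F \<alpha> \<beta> = Pm X \<alpha> \<beta> $$ (i, j)" for \<alpha> \<beta> using i j by (simp add: F_def f_def Pm_def n_def)
  have inv: "(\<Sum>\<alpha><p. \<Sum>\<beta><p. z ^ (\<alpha> * y0 + \<beta> * b0) * F \<alpha> \<beta>) = of_nat (p * p) * f y0 b0"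
    if y0: "y0 < p" and b0: "b0 < p" for y0 b0
  proof -
    have "(\<Sum>\<alpha><p. \<Sum>\<beta><p. z ^ (\<alpha> * y0 + \<beta> * b0) * F \<alpha> \<beta>) =
        (\<Sum>\<alpha><p. \<Sum>\<beta><p. \<Sum>x<p. \<Sum>a<p. f x a * (inverse (z ^ (x * \<alpha> + a * \<beta>)) * z ^ (y0 * \<alpha> + b0 * \<beta>)))"
      by (simp add: F_def sum_distrib_left mult_ac)
    also have "\<dots> = (\<Sum>\<alpha><p. \<Sum>x<p. \<Sum>\<beta><p. \<Sum>a<p. f x a * (inverse (z ^ (x * \<alpha> + a * \<beta>)) * z ^ (y0 * \<alpha> + b0 * \<beta>)))"
      by (intro sum.cong refl sum.swap)
    also have "\<dots> = (\<Sum>x<p. \<Sum>\<alpha><p. \<Sum>\<beta><p. \<Sum>a<p. f x a * (inverse (z ^ (x * \<alpha> + a * \<beta>)) * z ^ (y0 * \<alpha> + b0 * \<beta>)))"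
      by (rule sum.swap)
    also have "\<dots> = (\<Sum>x<p. \<Sum>\<alpha><p. \<Sum>a<p. \<Sum>\<beta><p. f x a * (inverse (z ^ (x * \<alpha> + a * \<beta>)) * z ^ (y0 * \<alpha> + b0 * \<beta>)))"
      by (intro sum.cong refl sum.swap)
    also have "\<dots> = (\<Sum>x<p. \<Sum>a<p. \<Sum>\<alpha><p. \<Sum>\<beta><p. f x a * (inverse (z ^ (x * \<alpha> + a * \<beta>)) * z ^ (y0 * \<alpha> + b0 * \<beta>)))"
      by (intro sum.cong refl sum.swap)
    also have "\<dots> = (\<Sum>x<p. \<Sum>a<p. f x a * (\<Sum>\<alpha><p. \<Sum>\<beta><p. inverse (z ^ (x * \<alpha> + a * \<beta>)) * z ^ (y0 * \<alpha> + b0 * \<beta>)))"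
      by (simp add: sum_distrib_left)
    also have "\<dots> = (\<Sum>x<p. \<Sum>a<p. f x a * (if y0 mod p = x mod p \<and> b0 mod p = a mod p then of_nat (p * p) else 0))"
      by (simp only: char_sum)
    also have "\<dots> = (\<Sum>x<p. \<Sum>a<p. (if x = y0 then (if a = b0 then f x a * of_nat (p * p) else 0) else 0))"
      by (intro sum.cong refl) (use y0 b0 in auto)
    also have "\<dots> = (\<Sum>x<p. (if x = y0 then f x b0 * of_nat (p * p) else 0))"
      by (intro sum.cong refl) (use b0 in auto)
    also have "\<dots> = f y0 b0 * of_nat (p * p)" using y0 by simp
    finally show ?thesis by (simp add: mult.commute)
  qed
  have only0: "(\<Sum>\<alpha><p. \<Sum>\<beta><p. z ^ (\<alpha> * y0 + \<beta> * b0) * F \<alpha> \<beta>) = F 0 0" for y0 b0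
  proof -
    have "(\<Sum>\<alpha><p. \<Sum>\<beta><p. z ^ (\<alpha> * y0 + \<beta> * b0) * F \<alpha> \<beta>) =
        (\<Sum>\<alpha><p. \<Sum>\<beta><p. (if \<alpha> = 0 then (if \<beta> = 0 then F 0 0 else 0) else 0))"
    proof (intro sum.cong refl)
      fix \<alpha> \<beta> assume a: "\<alpha> \<in> {..<p}" and b: "\<beta> \<in> {..<p}"
      show "z ^ (\<alpha> * y0 + \<beta> * b0) * F \<alpha> \<beta> = (if \<alpha> = 0 then (if \<beta> = 0 then F 0 0 else 0) else 0)"
        using h[of \<alpha> \<beta>] a b i j FP by (auto simp: n_def)
    qed
    also have "\<dots> = (\<Sum>\<alpha><p. (if \<alpha> = 0 then F 0 0 else 0))"
      by (intro sum.cong refl) (use p_pos in auto)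
    also have "\<dots> = F 0 0" using p_pos by simp
    finally show ?thesis .
  qed
  have pp0: "(of_nat (p * p) :: 'k) \<noteq> 0" using p_pos by simp
  have "of_nat (p * p) * f x0 a0 = of_nat (p * p) * f 0 0"
    using inv[OF x0 a0] inv[OF p_pos p_pos] only0[of x0 a0] only0[of 0 0] by auto
  then have "f x0 a0 = f 0 0" using pp0 by simp
  also have "f 0 0 = (1\<^sub>m n :: 'k mat) $$ (i, j)" using GL_one[OF X] by (simp add: f_def n_def)
  finally show "snd X (x0, a0, 0) $$ (i, j) = (1\<^sub>m (fst X) :: 'k mat) $$ (i, j)" by (simp add: f_def n_def)
qed (use GL_carrier[OF X x0 a0 q_pos] in auto)

end

context gs
begin

lemma trivial_V_contra:
  fixes X :: "(nat \<times> nat \<times> nat, 'k) rep"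
  assumes X: "X \<in> rep_obj G2 m2 sd_one"
    and triv: "\<And>x a. x < p \<Longrightarrow> a < p \<Longrightarrow> snd X (x, a, 0) = 1\<^sub>m (fst X)"
    and es: "end_scalar G2 X"
  shows "end_scalar G2 (rep_tensor X X)"
proof -
  define n where "n = fst X"
  have q1: "1 < q" using q_gt2 by simp
  have red: "snd X (x, a, c) = snd X (0, 0, c)" if "(x, a, c) \<in> G2" for x a c
  proof -
    have xac: "x < p" "a < p" "c < q" using that by (auto simp: sd_carrier_def)
    have "snd X (x, a, c) = snd X (x, a, 0) * snd X (0, 0, c)" by (rule GL1[OF X xac])
    then show ?thesis using triv[OF xac(1,2)] GL_carrier[OF X p_pos p_pos xac(3)] by simp
  qed
  have t_hom: "snd X (0, 0, 1) \<in> rep_hom G2 X X"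
  proof (rule homI)
    show "snd X (0, 0, 1) \<in> carrier_mat (fst X) (fst X)" by (rule GL_carrier[OF X p_pos p_pos q1])
    fix g assume g: "g \<in> G2"
    obtain x a c where gd: "g = (x, a, c)" by (cases g) auto
    have c: "c < q" using g gd by (auto simp: sd_carrier_def)
    have "snd X (0, 0, 1) * snd X (0, 0, c) = snd X (0, 0, (1 + c) mod q)" by (rule GL2[OF X q1 c])
    moreover have "snd X (0, 0, c) * snd X (0, 0, 1) = snd X (0, 0, (c + 1) mod q)" by (rule GL2[OF X c q1])
    ultimately show "snd X (0, 0, 1) * snd X g = snd X g * snd X (0, 0, 1)"
      using red[of x a c] g gd by (simp add: add.commute)
  qed
  obtain lam where lam: "snd X (0, 0, 1) = lam \<cdot>\<^sub>m 1\<^sub>m n"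
    using es t_hom unfolding end_scalar_def n_def by blast
  have scal: "\<exists>mu. snd X (0, 0, c) = mu \<cdot>\<^sub>m 1\<^sub>m n" if "c < q" for c
    using that
  proof (induction c)
    case 0
    have "(1::'k) \<cdot>\<^sub>m 1\<^sub>m n = 1\<^sub>m n" by (rule eq_matI) auto
    then show ?case using GL_one[OF X] by (metis n_def)
  next
    case (Suc c)
    then obtain mu where mu: "snd X (0, 0, c) = mu \<cdot>\<^sub>m 1\<^sub>m n" by auto
    have "snd X (0, 0, 1) * snd X (0, 0, c) = snd X (0, 0, (1 + c) mod q)" using Suc.prems by (intro GL2[OF X q1]) auto
    then have "snd X (0, 0, Suc c) = (lam \<cdot>\<^sub>m 1\<^sub>m n) * (mu \<cdot>\<^sub>m 1\<^sub>m n)" using Suc.prems lam mu by simp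
    also have "\<dots> = lam \<cdot>\<^sub>m (1\<^sub>m n * (mu \<cdot>\<^sub>m 1\<^sub>m n))"
      by (rule mult_smult_assoc_mat[of _ n n _ n]) auto
    also have "\<dots> = lam \<cdot>\<^sub>m (mu \<cdot>\<^sub>m 1\<^sub>m n)" by simp
    also have "\<dots> = (lam * mu) \<cdot>\<^sub>m 1\<^sub>m n" by (rule eq_matI) auto
    finally show ?case by blast
  qed
  have all_hom: "M \<in> rep_hom G2 X X" if M: "M \<in> carrier_mat n n" for M
  proof (rule homI)
    show "M \<in> carrier_mat (fst X) (fst X)" using M by (simp add: n_def)
    fix g assume g: "g \<in> G2"
    obtain x a c where gd: "g = (x, a, c)" by (cases g) auto
    have c: "c < q" using g gd by (auto simp: sd_carrier_def)
    obtain mu where mu: "snd X (0, 0, c) = mu \<cdot>\<^sub>m 1\<^sub>m n" using scal[OF c] by blast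
    have "snd X g = mu \<cdot>\<^sub>m 1\<^sub>m n" using red[of x a c] g gd mu by simp
    moreover have "M * (mu \<cdot>\<^sub>m 1\<^sub>m n) = mu \<cdot>\<^sub>m M"
      using mult_smult_distrib[OF M, of "1\<^sub>m n" n mu] M by simp
    moreover have "(mu \<cdot>\<^sub>m 1\<^sub>m n) * M = mu \<cdot>\<^sub>m M"
      using mult_smult_assoc_mat[of "1\<^sub>m n" n n M n mu] M by simp
    ultimately show "M * snd X g = snd X g * M" by simp
  qed
  have n1: "n \<le> 1"
  proof (rule ccontr)
    assume "\<not> n \<le> 1"
    then have n2: "1 < n" by simp
    define M :: "'k mat" where "M = mat n n (\<lambda>(i, j). if i = 0 \<and> j = 1 then 1 else 0)"
    have "M \<in> carrier_mat n n" by (simp add: M_def)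
    then obtain cc where "M = cc \<cdot>\<^sub>m 1\<^sub>m n" using all_hom es unfolding end_scalar_def n_def by blast
    then have "M $$ (0, 1) = 0" using n2 by simp
    moreover have "M $$ (0, 1) = 1" using n2 by (simp add: M_def)
    ultimately show False by simp
  qed
  show ?thesis unfolding end_scalar_def
  proof
    fix T assume T: "T \<in> rep_hom G2 (rep_tensor X X) (rep_tensor X X)"
    have Tc: "T \<in> carrier_mat (n * n) (n * n)" using homD(1)[OF T] by (simp add: rep_tensor_def n_def)
    show "\<exists>c. T = c \<cdot>\<^sub>m 1\<^sub>m (fst (rep_tensor X X))"
    proof (cases "n = 0")
      case True
      then have "T = 1 \<cdot>\<^sub>m 1\<^sub>m (fst (rep_tensor X X))" using Tc
        by (intro eq_matI) (auto simp: rep_tensor_def n_def)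
      then show ?thesis by blast
    next
      case False
      then have n: "n = 1" using n1 by simp
      have "T = T $$ (0, 0) \<cdot>\<^sub>m 1\<^sub>m (fst (rep_tensor X X))" using Tc n
        by (intro eq_matI) (auto simp: rep_tensor_def n_def)
      then show ?thesis by blast
    qed
  qed
qed

definition ek :: "nat \<Rightarrow> nat \<Rightarrow> 'k mat" where
  "ek n k = mat n 1 (\<lambda>(l, _). if l = k then 1 else 0)"

lemma nonzero_weight:
  assumes X: "X \<in> rep_obj G2 m2 sd_one" and es: "end_scalar G2 X"
    and nes: "\<not> end_scalar G2 (rep_tensor X X)"
  shows "\<exists>\<alpha> \<beta> u. \<alpha> < p \<and> \<beta> < p \<and> (\<alpha>, \<beta>) \<noteq> (0, 0) \<and> wv X \<alpha> \<beta> u \<and> (\<exists>i < fst X. u $$ (i, 0) \<noteq> 0)"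
proof (rule ccontr)
  assume nex: "\<not> ?thesis"
  define n where "n = fst X"
  have "Pm X \<alpha> \<beta> = 0\<^sub>m n n" if ab: "\<alpha> < p" "\<beta> < p" "(\<alpha>, \<beta>) \<noteq> (0, 0)" for \<alpha> \<beta>
  proof (rule ccontr)
    assume ne: "Pm X \<alpha> \<beta> \<noteq> 0\<^sub>m n n"
    obtain i k where ik: "i < n" "k < n" "Pm X \<alpha> \<beta> $$ (i, k) \<noteq> 0"
    proof -
      have "\<exists>i k. i < n \<and> k < n \<and> Pm X \<alpha> \<beta> $$ (i, k) \<noteq> 0"
      proof (rule ccontr)
        assume "\<not> (\<exists>i k. i < n \<and> k < n \<and> Pm X \<alpha> \<beta> $$ (i, k) \<noteq> 0)"
        then have "Pm X \<alpha> \<beta> = 0\<^sub>m n n" by (intro eq_matI) (auto simp: Pm_def n_def)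
        then show False using ne by simp
      qed
      then show ?thesis using that by blast
    qed
    define u where "u = Pm X \<alpha> \<beta> * ek n k"
    have ekc: "ek n k \<in> carrier_mat n 1" by (simp add: ek_def)
    have Pc: "Pm X \<alpha> \<beta> \<in> carrier_mat n n" by (simp add: n_def)
    have uc: "u \<in> carrier_mat n 1" using ekc Pc by (simp add: u_def)
    have ui: "u $$ (i, 0) = Pm X \<alpha> \<beta> $$ (i, k)"
    proof -
      have "u $$ (i, 0) = (\<Sum>l<n. Pm X \<alpha> \<beta> $$ (i, l) * (if l = k then 1 else 0))"
        using ik Pc ekc by (simp add: u_def index_mult_mat scalar_prod_def atLeast0LessThan ek_def)
      also have "\<dots> = Pm X \<alpha> \<beta> $$ (i, k)" using sum_delta_right[OF ik(2), of "\<lambda>l. Pm X \<alpha> \<beta> $$ (i, l)" "\<lambda>_. 1"] by simp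
      finally show ?thesis .
    qed
    have "wv X \<alpha> \<beta> u" unfolding wv_def
    proof (intro conjI allI impI)
      show "u \<in> carrier_mat (fst X) 1" using uc by (simp add: n_def)
      fix x a assume x: "x < p" and a: "a < p"
      have cx: "snd X (x, a, 0) \<in> carrier_mat n n" using GL_carrier[OF X x a q_pos] by (simp add: n_def)
      have "snd X (x, a, 0) * u = (snd X (x, a, 0) * Pm X \<alpha> \<beta>) * ek n k"
        unfolding u_def using cx Pc ekc by (rule assoc_mult_mat[symmetric])
      also have "\<dots> = (z ^ (\<alpha> * x + \<beta> * a) \<cdot>\<^sub>m Pm X \<alpha> \<beta>) * ek n k" using Pm_shift[OF X x a] by simp
      also have "\<dots> = z ^ (\<alpha> * x + \<beta> * a) \<cdot>\<^sub>m u" unfolding u_def using Pc ekc by (rule mult_smult_assoc_mat)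
      finally show "snd X (x, a, 0) * u = z ^ (\<alpha> * x + \<beta> * a) \<cdot>\<^sub>m u" .
    qed
    then have "\<not> (\<exists>i<fst X. u $$ (i, 0) \<noteq> 0)" using nex ab by blast
    then show False using ik ui by (auto simp: n_def)
  qed
  then have "snd X (x, a, 0) = 1\<^sub>m (fst X)" if "x < p" "a < p" for x a
    using fourier[OF X _ that] by (simp add: n_def)
  then have "end_scalar G2 (rep_tensor X X)" using trivial_V_contra[OF X _ es] by blast
  then show False using nes by simp
qed

end

lemma smult_smult_mat: "a \<cdot>\<^sub>m (b \<cdot>\<^sub>m A) = (a * b :: 'a::comm_ring_1) \<cdot>\<^sub>m A"
  by (rule eq_matI) (auto simp: mult.assoc)

lemma one_smult_mat': "(1::'a::semiring_1) \<cdot>\<^sub>m A = A"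
  by (rule eq_matI) auto

fun vp :: "'a::semiring_1 mat \<Rightarrow> nat \<Rightarrow> 'a mat \<Rightarrow> 'a mat" where
  "vp y 0 R = R"
| "vp y (Suc k) R = kron y (vp y k R)"

lemma kron_nz:
  assumes a: "a \<in> carrier_mat n1 1" and b: "b \<in> carrier_mat n2 1"
    and i1: "i1 < n1" and i2: "i2 < n2" and ai: "a $$ (i1, 0) \<noteq> 0" and bi: "b $$ (i2, 0) \<noteq> (0::'a::{semiring_1,semiring_no_zero_divisors})"
  shows "i1 * n2 + i2 < n1 * n2" "kron a b $$ (i1 * n2 + i2, 0) \<noteq> 0"
proof -
  have "i1 * n2 + i2 < i1 * n2 + n2" using i2 by simp
  also have "\<dots> = (i1 + 1) * n2" by simp
  also have "\<dots> \<le> n1 * n2" using i1 by (intro mult_right_mono) auto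
  finally show lt: "i1 * n2 + i2 < n1 * n2" .
  have "kron a b $$ (i1 * n2 + i2, 0) = a $$ (i1, 0) * b $$ (i2, 0)"
    using a b lt i2 by (simp add: kron_index)
  then show "kron a b $$ (i1 * n2 + i2, 0) \<noteq> 0" using ai bi by simp
qed

context gs
begin

lemma wv_tensor:
  fixes X1 X2 :: "(nat \<times> nat \<times> nat, 'k) rep"
  assumes X1: "X1 \<in> rep_obj G2 m2 sd_one" and X2: "X2 \<in> rep_obj G2 m2 sd_one"
    and u1: "wv X1 a1 b1 u1" and u2: "wv X2 a2 b2 u2"
  shows "wv (rep_tensor X1 X2) (a1 + a2) (b1 + b2) (kron u1 u2)"
  unfolding wv_def
proof (intro conjI allI impI)
  have c1: "u1 \<in> carrier_mat (fst X1) 1" and c2: "u2 \<in> carrier_mat (fst X2) 1" using u1 u2 by (auto simp: wv_def)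
  show "kron u1 u2 \<in> carrier_mat (fst (rep_tensor X1 X2)) 1" using c1 c2 kron_carrier[OF c1 c2] by (simp add: rep_tensor_def)
  fix x a assume x: "x < p" and a: "a < p"
  have "snd (rep_tensor X1 X2) (x, a, 0) * kron u1 u2 = kron (snd X1 (x, a, 0) * u1) (snd X2 (x, a, 0) * u2)"
    unfolding rep_tensor_def using GL_carrier[OF X1 x a q_pos] GL_carrier[OF X2 x a q_pos] c1 c2
    by (simp add: kron_mult)
  also have "\<dots> = kron (z ^ (a1 * x + b1 * a) \<cdot>\<^sub>m u1) (z ^ (a2 * x + b2 * a) \<cdot>\<^sub>m u2)"
    using u1 u2 x a by (simp add: wv_def)
  also have "\<dots> = (z ^ (a1 * x + b1 * a) * z ^ (a2 * x + b2 * a)) \<cdot>\<^sub>m kron u1 u2"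
    by (simp add: kron_smult_left kron_smult_right smult_smult_mat mult.commute)
  also have "z ^ (a1 * x + b1 * a) * z ^ (a2 * x + b2 * a) = z ^ ((a1 + a2) * x + (b1 + b2) * a)"
    by (simp add: power_add[symmetric] algebra_simps)
  finally show "snd (rep_tensor X1 X2) (x, a, 0) * kron u1 u2 = z ^ ((a1 + a2) * x + (b1 + b2) * a) \<cdot>\<^sub>m kron u1 u2" .
qed

lemma wv_unit: "wv (rpow X 0) 0 0 (1\<^sub>m 1 :: 'k mat)"
  unfolding wv_def by (auto simp: rep_unit_def intro!: eq_matI)

lemma wv_vp:
  fixes Zj :: "(nat \<times> nat \<times> nat, 'k) rep"
  assumes Zj: "Zj \<in> rep_obj G2 m2 sd_one" and y: "wv Zj \<gamma> \<delta> y" and Q: "wv (rpow Zj b) \<gamma>' \<delta>' Q"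
  shows "wv (rpow Zj (k + b)) (k * \<gamma> + \<gamma>') (k * \<delta> + \<delta>') (vp y k Q)"
proof (induction k)
  case 0 then show ?case using Q by simp
next
  case (Suc k)
  have "wv (rep_tensor Zj (rpow Zj (k + b))) (\<gamma> + (k * \<gamma> + \<gamma>')) (\<delta> + (k * \<delta> + \<delta>')) (kron y (vp y k Q))"
    by (rule wv_tensor[OF Zj rpow_obj[OF Zj] y Suc.IH])
  then show ?case by (simp add: add.assoc)
qed

lemma vp_nz:
  assumes yc: "y \<in> carrier_mat n 1" and i: "i < n" and yi: "y $$ (i, 0) \<noteq> 0"
    and Qc: "Q \<in> carrier_mat m 1" and j: "j < m" and Qj: "Q $$ (j, 0) \<noteq> (0::'k)"
  shows "vp y k Q \<in> carrier_mat (n ^ k * m) 1 \<and> (\<exists>l < n ^ k * m. vp y k Q $$ (l, 0) \<noteq> 0)"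
proof (induction k)
  case 0 then show ?case using Qc j Qj by auto
next
  case (Suc k)
  then obtain l where l: "l < n ^ k * m" "vp y k Q $$ (l, 0) \<noteq> 0" and c: "vp y k Q \<in> carrier_mat (n ^ k * m) 1" by blast
  have "kron y (vp y k Q) \<in> carrier_mat (n * (n ^ k * m)) 1" using kron_carrier[OF yc c] by simp
  moreover note kron_nz[OF yc c i l(1) yi l(2)]
  ultimately show ?case by (auto simp: mult.assoc)
qed

lemma wv_fix:
  assumes w: "wv Y EA EB w" and dA: "p dvd EA" and dB: "p dvd EB" and x: "x < p" and a: "a < p"
  shows "snd Y (x, a, 0) * w = w"
proof -
  have "p dvd EA * x + EB * a" using dA dB by simp
  then have "z ^ (EA * x + EB * a) = 1" using zeta by simp
  moreover have "w \<in> carrier_mat (fst Y) 1" using w by (simp add: wv_def)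
  ultimately show ?thesis using w x a by (simp add: wv_def one_smult_mat')
qed

lemma orbit_fix:
  fixes Y :: "(nat \<times> nat \<times> nat, 'k) rep"
  assumes Y: "Y \<in> rep_obj G2 m2 sd_one" and w: "wv Y EA EB w" and dA: "p dvd EA" and dB: "p dvd EB"
    and x: "x < p" and a: "a < p" and c: "c < q"
  shows "snd Y (x, a, c) * w = snd Y (0, 0, c) * w"
proof -
  have wc: "w \<in> carrier_mat (fst Y) 1" using w by (simp add: wv_def)
  have x': "(r ^ c * x) mod p < p" "(s ^ c * a) mod p < p" using p_pos by auto
  have "snd Y (x, a, c) * w = (snd Y (0, 0, c) * snd Y ((r ^ c * x) mod p, (s ^ c * a) mod p, 0)) * w"
    using GL1[OF Y x a c] GL3[OF Y x a c] by simp
  also have "\<dots> = snd Y (0, 0, c) * (snd Y ((r ^ c * x) mod p, (s ^ c * a) mod p, 0) * w)"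
    using GL_carrier[OF Y p_pos p_pos c] GL_carrier[OF Y x'(1) x'(2) q_pos] wc by (rule assoc_mult_mat)
  also have "\<dots> = snd Y (0, 0, c) * w" using wv_fix[OF w dA dB x'] by simp
  finally show ?thesis .
qed

lemma orbit_ne:
  assumes nd: "\<not> (p dvd \<alpha> \<and> p dvd \<beta>)" and c: "0 < c" "c < q"
  shows "\<not> ((\<alpha> * r ^ c) mod p = \<alpha> mod p \<and> (\<beta> * s ^ c) mod p = \<beta> mod p)"
proof
  assume h: "(\<alpha> * r ^ c) mod p = \<alpha> mod p \<and> (\<beta> * s ^ c) mod p = \<beta> mod p"
  show False
  proof (cases "p dvd \<alpha>")
    case False
    have "(\<alpha> * r ^ c) mod p = (\<alpha> * 1) mod p" using h by simp
    then have "r ^ c mod p = 1 mod p" by (rule cancel_mod[OF False])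
    then show False using r_ord[OF c] p_gt2 by simp
  next
    case True
    then have nb: "\<not> p dvd \<beta>" using nd by simp
    have "(\<beta> * s ^ c) mod p = (\<beta> * 1) mod p" using h by simp
    then have "s ^ c mod p = 1 mod p" by (rule cancel_mod[OF nb])
    then show False using s_ord[OF c] p_gt2 by simp
  qed
qed

end

context gs
begin

lemma t_nz:
  fixes Z :: "(nat \<times> nat \<times> nat, 'k) rep"
  assumes Z: "Z \<in> rep_obj G2 m2 sd_one" and u: "u \<in> carrier_mat (fst Z) 1" and j0: "j0 < fst Z" and uj: "u $$ (j0, 0) \<noteq> 0"
  shows "\<exists>l < fst Z. (snd Z (0, 0, 1) * u) $$ (l, 0) \<noteq> 0"
proof (rule ccontr)
  assume nz: "\<not> ?thesis"
  have q1: "1 < q" using q_gt2 by simp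
  have qm: "q - 1 < q" using q_pos by simp
  have c1: "snd Z (0, 0, 1) \<in> carrier_mat (fst Z) (fst Z)" by (rule GL_carrier[OF Z p_pos p_pos q1])
  have c2: "snd Z (0, 0, q - 1) \<in> carrier_mat (fst Z) (fst Z)" by (rule GL_carrier[OF Z p_pos p_pos qm])
  have z1: "snd Z (0, 0, 1) * u = 0\<^sub>m (fst Z) 1"
    using nz c1 u by (intro eq_matI) auto
  have o: "snd Z (0, 0, q - 1) * snd Z (0, 0, 1) = 1\<^sub>m (fst Z)"
    using GL2[OF Z qm q1] GL_one[OF Z] q_pos by simp
  have "u = (snd Z (0, 0, q - 1) * snd Z (0, 0, 1)) * u" using o u by simp
  also have "\<dots> = snd Z (0, 0, q - 1) * (snd Z (0, 0, 1) * u)"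
    using c2 c1 u by (rule assoc_mult_mat)
  finally have "u = snd Z (0, 0, q - 1) * 0\<^sub>m (fst Z) 1" using z1 by simp
  then have "u = 0\<^sub>m (fst Z) 1" using c2 by simp
  then show False using uj j0 by simp
qed

lemma inv_construct:
  fixes Zi Zj :: "(nat \<times> nat \<times> nat, 'k) rep"
  assumes Zi: "Zi \<in> rep_obj G2 m2 sd_one" and Zj: "Zj \<in> rep_obj G2 m2 sd_one"
    and ui: "wv Zi \<alpha>i \<beta>i ui" and i0: "i0 < fst Zi" and ui0: "ui $$ (i0, 0) \<noteq> 0"
    and nd: "\<not> (p dvd \<alpha>i \<and> p dvd \<beta>i)"
    and uj: "wv Zj \<alpha>j \<beta>j uj" and j0: "j0 < fst Zj" and uj0: "uj $$ (j0, 0) \<noteq> 0"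
    and dA: "p dvd (\<alpha>i + k0 * \<alpha>j + k1 * r * \<alpha>j)" and dB: "p dvd (\<beta>i + k0 * \<beta>j + k1 * s * \<beta>j)"
  shows "\<not> hom_zero G2 rep_unit (rep_tensor Zi (rpow Zj (k1 + k0)))"
proof
  assume hz: "hom_zero G2 rep_unit (rep_tensor Zi (rpow Zj (k1 + k0)))"
  have q1: "1 < q" using q_gt2 by simp
  define b where "b = k1 + k0"
  define P where "P = rpow Zj b"
  define Y where "Y = rep_tensor Zi P"
  have Pobj: "P \<in> rep_obj G2 m2 sd_one" unfolding P_def by (rule rpow_obj[OF Zj])
  have Yobj: "Y \<in> rep_obj G2 m2 sd_one" unfolding Y_def by (rule tensor_obj[OF Zi Pobj])
  define ni where "ni = fst Zi"
  define nj where "nj = fst Zj"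
  define nP where "nP = fst P"
  have nPe: "nP = nj ^ b" unfolding nP_def P_def nj_def by (simp add: rpow_fst)
  define N where "N = ni * nP"
  have fY: "fst Y = N" by (simp add: Y_def rep_tensor_def N_def ni_def nP_def)
  define Q0 where "Q0 = vp uj k0 (1\<^sub>m 1 :: 'k mat)"
  have wQ0: "wv (rpow Zj (k0 + 0)) (k0 * \<alpha>j + 0) (k0 * \<beta>j + 0) Q0"
    unfolding Q0_def by (rule wv_vp[OF Zj uj wv_unit])
  define y1 where "y1 = snd Zj (0, 0, 1) * uj"
  have wy1: "wv Zj (\<alpha>j * r ^ 1) (\<beta>j * s ^ 1) y1" unfolding y1_def by (rule wv_shift[OF Zj uj q1])
  define Q where "Q = vp y1 k1 Q0"
  have wQ: "wv P (k1 * (\<alpha>j * r ^ 1) + (k0 * \<alpha>j + 0)) (k1 * (\<beta>j * s ^ 1) + (k0 * \<beta>j + 0)) Q"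
    unfolding Q_def P_def b_def using wv_vp[OF Zj wy1 wQ0, of k1] by simp
  define w where "w = kron ui Q"
  define EA where "EA = \<alpha>i + (k1 * (\<alpha>j * r ^ 1) + (k0 * \<alpha>j + 0))"
  define EB where "EB = \<beta>i + (k1 * (\<beta>j * s ^ 1) + (k0 * \<beta>j + 0))"
  have ww: "wv Y EA EB w" unfolding Y_def w_def EA_def EB_def by (rule wv_tensor[OF Zi Pobj ui wQ])
  have dEA: "p dvd EA" using dA unfolding EA_def by (simp add: algebra_simps)
  have dEB: "p dvd EB" using dB unfolding EB_def by (simp add: algebra_simps)
  have uic: "ui \<in> carrier_mat ni 1" using ui by (simp add: wv_def ni_def)
  have ujc: "uj \<in> carrier_mat nj 1" using uj by (simp add: wv_def nj_def)
  have y1c: "y1 \<in> carrier_mat nj 1" using wy1 by (simp add: wv_def nj_def)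
  have Qc: "Q \<in> carrier_mat nP 1" using wQ by (simp add: wv_def nP_def)
  have wc: "w \<in> carrier_mat N 1" using ww fY by (simp add: wv_def)
  obtain lQ where lQ: "lQ < nP" "Q $$ (lQ, 0) \<noteq> 0"
  proof -
    obtain l1 where l1: "l1 < nj" "y1 $$ (l1, 0) \<noteq> 0"
      using t_nz[OF Zj _ j0 uj0] ujc unfolding y1_def nj_def by blast
    obtain l0 where l0: "l0 < nj ^ k0 * 1" "Q0 $$ (l0, 0) \<noteq> 0"
      using vp_nz[OF ujc j0[folded nj_def] uj0, of "1\<^sub>m 1" 1 0 k0] by (auto simp: Q0_def)
    have Q0c: "Q0 \<in> carrier_mat (nj ^ k0 * 1) 1"
      using vp_nz[OF ujc j0[folded nj_def] uj0, of "1\<^sub>m 1" 1 0 k0] by (auto simp: Q0_def)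
    obtain l where "l < nj ^ k1 * (nj ^ k0 * 1)" "Q $$ (l, 0) \<noteq> 0"
      using vp_nz[OF y1c l1 Q0c l0, of k1] unfolding Q_def by blast
    moreover have "nj ^ k1 * (nj ^ k0 * 1) = nP" using nPe b_def by (simp add: power_add)
    ultimately show ?thesis using that by auto
  qed
  define W where "W = vsum N (\<lambda>c. snd Y (0, 0, c) * w) q"
  have Yc: "snd Y g \<in> carrier_mat N N" if "g \<in> G2" for g using obj_carrier[OF Yobj that] fY by simp
  have Whom: "W \<in> rep_hom G2 rep_unit Y"
  proof (rule homI)
    show "W \<in> carrier_mat (fst Y) (fst (rep_unit :: (nat \<times> nat \<times> nat, 'k) rep))"
    proof -
      have "W \<in> carrier_mat N 1" unfolding W_def by (rule vsum_carrier)
      then show ?thesis using fY by (simp add: rep_unit_def)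
    qed
    fix g assume g: "g \<in> G2"
    obtain x a c0 where gd: "g = (x, a, c0)" by (cases g) auto
    have x: "x < p" and a: "a < p" and c0: "c0 < q" using g gd by (auto simp: sd_carrier_def)
    have "snd Y g * W = vsum N (\<lambda>c. snd Y g * (snd Y (0, 0, c) * w)) q"
      unfolding W_def using Yc[OF g] Yc[OF inG2[OF p_pos p_pos]] wc
      by (intro mult_vsum) (auto intro: mult_carrier_mat)
    also have "\<dots> = vsum N (\<lambda>c. snd Y (0, 0, (c0 + c) mod q) * w) q"
    proof -
      have "snd Y g * (snd Y (0, 0, c) * w) = snd Y (0, 0, (c0 + c) mod q) * w" if c: "c < q" for c
      proof -
        have "snd Y g * (snd Y (0, 0, c) * w) = (snd Y g * snd Y (0, 0, c)) * w"
          using Yc[OF g] Yc[OF inG2[OF p_pos p_pos c]] wc by (rule assoc_mult_mat[symmetric])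
        also have "snd Y g * snd Y (0, 0, c) = snd Y (m2 g (0, 0, c))"
          using obj_mult[OF Yobj g inG2[OF p_pos p_pos c]] by simp
        also have "m2 g (0, 0, c) = (x, a, (c0 + c) mod q)" using gd x a by (simp add: m2_eq)
        also have "snd Y (x, a, (c0 + c) mod q) * w = snd Y (0, 0, (c0 + c) mod q) * w"
          using q_pos by (intro orbit_fix[OF Yobj ww dEA dEB x a]) simp
        finally show ?thesis .
      qed
      then show ?thesis unfolding vsum_def by (intro eq_matI) auto
    qed
    also have "\<dots> = W"
      unfolding W_def vsum_def
      by (intro eq_matI) (auto simp: sum_shift_mod[OF q_pos, of "\<lambda>c. (snd Y (0, 0, c) * w) $$ (_, 0)"])
    finally have "snd Y g * W = W" .
    moreover have "W * 1\<^sub>m 1 = W" by (simp add: W_def vsum_def)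
    ultimately show "W * snd rep_unit g = snd Y g * W" by (simp add: rep_unit_def)
  qed
  have W0: "W = 0\<^sub>m N 1" using hz Whom fY unfolding hom_zero_def Y_def P_def b_def by (auto simp: rep_unit_def)
  define PP where "PP = kron (Pm Zi \<alpha>i \<beta>i) (1\<^sub>m nP)"
  have PPc: "PP \<in> carrier_mat N N" unfolding PP_def N_def ni_def by (rule kron_carrier) auto
  have trm: "PP * (snd Y (0, 0, c) * w) = (if c = 0 then of_nat (p * p) \<cdot>\<^sub>m w else 0\<^sub>m N 1)" if c: "c < q" for c
  proof -
    have ci: "snd Zi (0, 0, c) \<in> carrier_mat ni ni" using GL_carrier[OF Zi p_pos p_pos c] by (simp add: ni_def)
    have cP: "snd P (0, 0, c) \<in> carrier_mat nP nP" using GL_carrier[OF Pobj p_pos p_pos c] by (simp add: nP_def)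
    have "snd Y (0, 0, c) * w = kron (snd Zi (0, 0, c) * ui) (snd P (0, 0, c) * Q)"
      unfolding Y_def w_def rep_tensor_def using ci cP uic Qc by (simp add: kron_mult)
    then have "PP * (snd Y (0, 0, c) * w) = kron (Pm Zi \<alpha>i \<beta>i * (snd Zi (0, 0, c) * ui)) (1\<^sub>m nP * (snd P (0, 0, c) * Q))"
      unfolding PP_def using ci cP uic Qc by (simp add: kron_mult[of _ ni ni _ 1 _ nP nP _ 1] ni_def)
    also have "Pm Zi \<alpha>i \<beta>i * (snd Zi (0, 0, c) * ui) =
        (if (\<alpha>i * r ^ c) mod p = \<alpha>i mod p \<and> (\<beta>i * s ^ c) mod p = \<beta>i mod p then of_nat (p * p) else 0) \<cdot>\<^sub>m (snd Zi (0, 0, c) * ui)"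
      by (rule Pm_apply[OF Zi wv_shift[OF Zi ui c]])
    finally have e: "PP * (snd Y (0, 0, c) * w) = kron ((if (\<alpha>i * r ^ c) mod p = \<alpha>i mod p \<and> (\<beta>i * s ^ c) mod p = \<beta>i mod p then of_nat (p * p) else 0) \<cdot>\<^sub>m (snd Zi (0, 0, c) * ui)) (snd P (0, 0, c) * Q)"
      using cP Qc by simp
    show ?thesis
    proof (cases "c = 0")
      case True
      then show ?thesis using e GL_one[OF Zi] GL_one[OF Pobj] uic Qc
        by (simp add: ni_def nP_def w_def kron_smult_left)
    next
      case False
      then have "\<not> ((\<alpha>i * r ^ c) mod p = \<alpha>i mod p \<and> (\<beta>i * s ^ c) mod p = \<beta>i mod p)"
        using orbit_ne[OF nd _ c] by simp
      then have "(if (\<alpha>i * r ^ c) mod p = \<alpha>i mod p \<and> (\<beta>i * s ^ c) mod p = \<beta>i mod p then of_nat (p * p) else 0) = (0::'k)"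
        by (rule if_not_P)
      then have "PP * (snd Y (0, 0, c) * w) = kron (0 \<cdot>\<^sub>m (snd Zi (0, 0, c) * ui)) (snd P (0, 0, c) * Q)" using e by simp
      also have "\<dots> = 0\<^sub>m N 1" using ci cP uic Qc
        by (intro eq_matI) (auto simp: kron_index N_def div_lt)
      finally show ?thesis using False by simp
    qed
  qed
  have "PP * W = vsum N (\<lambda>c. PP * (snd Y (0, 0, c) * w)) q"
    unfolding W_def using PPc Yc[OF inG2[OF p_pos p_pos]] wc by (intro mult_vsum) (auto intro: mult_carrier_mat)
  also have "\<dots> = vsum N (\<lambda>c. if c = 0 then of_nat (p * p) \<cdot>\<^sub>m w else 0\<^sub>m N 1) q"
    unfolding vsum_def using trm by (intro eq_matI) auto
  finally have PW: "PP * W = vsum N (\<lambda>c. if c = 0 then of_nat (p * p) \<cdot>\<^sub>m w else 0\<^sub>m N 1) q" .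
  obtain l where l: "l < N" "w $$ (l, 0) \<noteq> 0"
    using kron_nz[OF uic Qc i0[folded ni_def] lQ(1) ui0 lQ(2)] unfolding w_def N_def by blast
  have "(PP * W) $$ (l, 0) = (\<Sum>c<q. (if c = 0 then of_nat (p * p) \<cdot>\<^sub>m w else 0\<^sub>m N 1) $$ (l, 0))"
    using PW l by (simp add: vsum_def)
  also have "\<dots> = (\<Sum>c<q. (if c = 0 then of_nat (p * p) * w $$ (l, 0) else 0))"
    using l wc by (intro sum.cong refl) auto
  also have "\<dots> = of_nat (p * p) * w $$ (l, 0)" using q_pos by simp
  finally have "(PP * W) $$ (l, 0) \<noteq> 0" using l p_pos by simp
  moreover have "(PP * W) $$ (l, 0) = 0" using W0 PPc l by simp
  ultimately show False by simp
qed

end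

context pqr
begin

definition pair_ok :: "(nat \<Rightarrow> nat) \<Rightarrow> (nat \<Rightarrow> nat) \<Rightarrow> nat \<Rightarrow> nat \<Rightarrow> bool" where
  "pair_ok A B i j \<longleftrightarrow> (\<exists>k0 k1. p dvd (A i + k0 * A j + k1 * r * A j) \<and> p dvd (B i + k0 * B j + k1 * s * B j))"

lemma pair_generic: "\<not> p dvd A j \<Longrightarrow> \<not> p dvd B j \<Longrightarrow> pair_ok A B i j"
  unfolding pair_ok_def using solve_generic by blast

lemma pair_A: assumes "p dvd A i" "p dvd A j" "\<not> p dvd B j" shows "pair_ok A B i j"
proof -
  obtain k0 where k0: "p dvd (B i + k0 * B j)" using solve_axis[OF assms(3)] by blast
  have "p dvd (A i + k0 * A j + 0 * r * A j)" using assms by simp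
  moreover have "p dvd (B i + k0 * B j + 0 * s * B j)" using k0 by simp
  ultimately show ?thesis unfolding pair_ok_def by blast
qed

lemma pair_B: assumes "p dvd B i" "p dvd B j" "\<not> p dvd A j" shows "pair_ok A B i j"
proof -
  obtain k0 where k0: "p dvd (A i + k0 * A j)" using solve_axis[OF assms(3)] by blast
  have "p dvd (A i + k0 * A j + 0 * r * A j)" using k0 by simp
  moreover have "p dvd (B i + k0 * B j + 0 * s * B j)" using assms by simp
  ultimately show ?thesis unfolding pair_ok_def by blast
qed

lemma pick_pair:
  fixes A B :: "nat \<Rightarrow> nat"
  assumes nd: "\<And>i. i < 3 \<Longrightarrow> \<not> (p dvd A i \<and> p dvd B i)"
  shows "\<exists>i<3. \<exists>j<3. i \<noteq> j \<and> pair_ok A B i j"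
proof (cases "\<exists>j<3. \<not> p dvd A j \<and> \<not> p dvd B j")
  case True
  then obtain j where j: "j < 3" "\<not> p dvd A j" "\<not> p dvd B j" by blast
  define i where "i = (if j = 0 then 1 else 0 :: nat)"
  have "i < 3" "i \<noteq> j" unfolding i_def by auto
  then show ?thesis using pair_generic[where A=A and B=B and j=j and i=i, OF j(2,3)] j(1) by blast
next
  case False
  then have cl: "p dvd A j \<or> p dvd B j" if "j < 3" for j using that by blast
  have cl2: "(p dvd A j \<and> \<not> p dvd B j) \<or> (p dvd B j \<and> \<not> p dvd A j)" if "j < 3" for j
    using cl[OF that] nd[OF that] by blast
  have "pair_ok A B 0 1 \<or> pair_ok A B 0 2 \<or> pair_ok A B 1 2"
    using cl2[of 0] cl2[of 1] cl2[of 2] pair_A[of A 0 1 B] pair_A[of A 0 2 B] pair_A[of A 1 2 B]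
      pair_B[of B 0 1 A] pair_B[of B 0 2 A] pair_B[of B 1 2 A] by auto
  moreover have "(0::nat) < 3" "(1::nat) < 3" "(2::nat) < 3" "(0::nat) \<noteq> 1" "(0::nat) \<noteq> 2" "(1::nat) \<noteq> 2" by auto
  ultimately show ?thesis by blast
qed

end

context gs
begin

lemma gprime_contra:
  fixes Zs :: "nat \<Rightarrow> (nat \<times> nat \<times> nat, 'k) rep"
  assumes obj: "\<And>i. i < 3 \<Longrightarrow> Zs i \<in> rep_obj G2 m2 sd_one"
    and es: "\<And>i. i < 3 \<Longrightarrow> end_scalar G2 (Zs i)"
    and nes: "\<And>i. i < 3 \<Longrightarrow> \<not> end_scalar G2 (rep_tensor (Zs i) (Zs i))"
    and hz: "\<And>i j b. i < 3 \<Longrightarrow> j < 3 \<Longrightarrow> i \<noteq> j \<Longrightarrow> hom_zero G2 rep_unit (rep_tensor (Zs i) (rpow (Zs j) b))"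
  shows False
proof -
  have "\<forall>i\<in>{..<3::nat}. \<exists>t. fst t < p \<and> fst (snd t) < p \<and> (fst t, fst (snd t)) \<noteq> (0, 0) \<and>
      wv (Zs i) (fst t) (fst (snd t)) (snd (snd t)) \<and> (\<exists>l < fst (Zs i). snd (snd t) $$ (l, 0) \<noteq> 0)"
  proof
    fix i :: nat assume "i \<in> {..<3}"
    then have i: "i < 3" by simp
    obtain \<alpha> \<beta> u where "\<alpha> < p" "\<beta> < p" "(\<alpha>, \<beta>) \<noteq> (0, 0)" "wv (Zs i) \<alpha> \<beta> u" "\<exists>l < fst (Zs i). u $$ (l, 0) \<noteq> 0"
      using nonzero_weight[OF obj[OF i] es[OF i] nes[OF i]] by blast
    then show "\<exists>t. fst t < p \<and> fst (snd t) < p \<and> (fst t, fst (snd t)) \<noteq> (0, 0) \<and>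
      wv (Zs i) (fst t) (fst (snd t)) (snd (snd t)) \<and> (\<exists>l < fst (Zs i). snd (snd t) $$ (l, 0) \<noteq> 0)"
      by (intro exI[of _ "(\<alpha>, \<beta>, u)"]) simp
  qed
  then obtain t where t: "\<And>i. i < 3 \<Longrightarrow> fst (t i) < p \<and> fst (snd (t i)) < p \<and> (fst (t i), fst (snd (t i))) \<noteq> (0, 0) \<and>
      wv (Zs i) (fst (t i)) (fst (snd (t i))) (snd (snd (t i))) \<and> (\<exists>l < fst (Zs i). snd (snd (t i)) $$ (l, 0) \<noteq> 0)"
    using bchoice[of "{..<3::nat}"] by (metis lessThan_iff)
  define A where "A i = fst (t i)" for i
  define B where "B i = fst (snd (t i))" for i
  define U where "U i = snd (snd (t i))" for i
  have nd: "\<not> (p dvd A i \<and> p dvd B i)" if i: "i < 3" for i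
  proof
    assume "p dvd A i \<and> p dvd B i"
    moreover have "A i < p" "B i < p" "(A i, B i) \<noteq> (0, 0)" using t[OF i] unfolding A_def B_def by auto
    ultimately show False by (auto dest: dvd_imp_le)
  qed
  have ex: "\<exists>i<3. \<exists>j<3. i \<noteq> j \<and> pair_ok A B i j" by (rule pick_pair) (rule nd)
  obtain i j :: nat where ij: "i < 3" "j < 3" "i \<noteq> j" and ok: "pair_ok A B i j"
    using ex by auto
  then obtain k0 k1 where dA: "p dvd (A i + k0 * A j + k1 * r * A j)" and dB: "p dvd (B i + k0 * B j + k1 * s * B j)"
    unfolding pair_ok_def by blast
  obtain li where li: "li < fst (Zs i)" "U i $$ (li, 0) \<noteq> 0" using t[OF ij(1)] unfolding U_def by blast
  obtain lj where lj: "lj < fst (Zs j)" "U j $$ (lj, 0) \<noteq> 0" using t[OF ij(2)] unfolding U_def by blast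
  have wi: "wv (Zs i) (A i) (B i) (U i)" using t[OF ij(1)] unfolding A_def B_def U_def by blast
  have wj: "wv (Zs j) (A j) (B j) (U j)" using t[OF ij(2)] unfolding A_def B_def U_def by blast
  have "\<not> hom_zero G2 rep_unit (rep_tensor (Zs i) (rpow (Zs j) (k1 + k0)))"
    by (rule inv_construct[OF obj[OF ij(1)] obj[OF ij(2)] wi li(1) li(2) nd[OF ij(1)] wj lj(1) lj(2) dA dB])
  then show False using hz[OF ij] by blast
qed

end

context gs
begin

definition Xs :: "nat \<Rightarrow> (nat \<times> nat \<times> nat, 'k) rep" where
  "Xs i = (if i = 0 then Wobj 1 0 else if i = 1 then Wobj 0 1 else Wobj 1 1)"

lemma Xs_obj: "Xs i \<in> rep_obj G1 m1 sd_one"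
  unfolding Xs_def by (simp add: W_obj)

lemma Xs_simple: "end_scalar G1 (Xs i)"
proof -
  have p1: "1 < p" "0 < p" using p_gt2 by auto
  show ?thesis unfolding Xs_def
    using W_simple[OF p1(1) p1(2), of 1 0] W_simple[OF p1(2) p1(1), of 0 1] W_simple[OF p1(1) p1(2), of 1 1]
    by auto
qed

lemma Xs_noninv: "\<not> end_scalar G1 (rep_tensor (Xs i) (Xs i))"
  unfolding Xs_def by (simp add: W_not_invertible)

lemma Xs_vanish:
  assumes i: "i < 3" and j: "j < 3" and ij: "i \<noteq> j"
  shows "hom_zero G1 rep_unit (rep_tensor (Xs i) (rpow (Xs j) b))"
proof -
  have p1: "1 < p" "0 < p" "p - 1 < p" using p_gt2 by auto
  have nd1: "\<not> p dvd (1::nat)" using p1 by auto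
  have ndp: "\<not> p dvd (p - 1)" using p1 by (auto dest: dvd_imp_le)
  have dp: "p dvd (1 * 1 + 1 * (p - 1))" using p1 by simp
  have "i = 0 \<or> i = 1 \<or> i = 2" "j = 0 \<or> j = 1 \<or> j = 2" using i j by auto
  then show ?thesis
  proof (elim disjE)
    assume "i = 0" "j = 0" then show ?thesis using ij by simp
  next
    assume "i = 0" "j = 1" then show ?thesis
      unfolding Xs_def using W_vanish[OF p1(1) p1(2), of 0 1 1 0 b] nd1 by simp
  next
    assume "i = 0" "j = 2" then show ?thesis
      unfolding Xs_def using W_vanish[OF p1(1) p1(3), of 1 1 1 0 b] nd1 dp by simp
  next
    assume "i = 1" "j = 0" then show ?thesis
      unfolding Xs_def using W_vanish[OF p1(2) p1(1), of 1 0 0 1 b] nd1 by simp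
  next
    assume "i = 1" "j = 1" then show ?thesis using ij by simp
  next
    assume "i = 1" "j = 2" then show ?thesis
      unfolding Xs_def using W_vanish[OF p1(1) p1(3), of 1 1 0 1 b] ndp dp by simp
  next
    assume "i = 2" "j = 0" then show ?thesis
      unfolding Xs_def using W_vanish[OF p1(2) p1(1), of 1 0 1 1 b] nd1 by simp
  next
    assume "i = 2" "j = 1" then show ?thesis
      unfolding Xs_def using W_vanish[OF p1(1) p1(2), of 0 1 1 1 b] nd1 by simp
  next
    assume "i = 2" "j = 2" then show ?thesis using ij by simp
  qed
qed

end

theorem corollary6p3:
  fixes p q r :: nat
  assumes "prime p" and "prime q" and "odd p" and "odd q" and "q dvd p - 1"
    and "r mod p \<noteq> 1" and "r ^ q mod p = 1"
  shows "\<not> tensor_equivalent_Rep (TYPE('k::alg_closed_field_char_0))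
            (sd_carrier p q) (sd_mult p q r r) sd_one
            (sd_carrier p q) (sd_mult p q r (r ^ (q - 1))) sd_one"
proof
  assume te: "tensor_equivalent_Rep (TYPE('k::alg_closed_field_char_0))
            (sd_carrier p q) (sd_mult p q r r) sd_one
            (sd_carrier p q) (sd_mult p q r (r ^ (q - 1))) sd_one"
  interpret P: pqr p q r using assms by unfold_locales
  obtain z :: 'k where zeta: "\<forall>k. z ^ k = 1 \<longleftrightarrow> p dvd k" using exists_zeta[OF assms(1)] by blast
  interpret Gs: gs p q r z using zeta by unfold_locales auto
  obtain F :: "(nat \<times> nat \<times> nat, 'k) rep \<Rightarrow> (nat \<times> nat \<times> nat, 'k) rep" and Fm J \<phi> where
    TE: "tensor_equivalence (sd_carrier p q) (sd_mult p q r r) sd_one (sd_carrier p q) (sd_mult p q r P.s) sd_one F Fm J \<phi>"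
    using te unfolding tensor_equivalent_Rep_def P.s_def by blast
  define Zs where "Zs i = F (Gs.Xs i)" for i
  show False
  proof (rule Gs.gprime_contra[of Zs])
    fix i :: nat assume i: "i < 3"
    show "Zs i \<in> rep_obj (sd_carrier p q) (sd_mult p q r P.s) sd_one"
      unfolding Zs_def by (rule te_obj[OF TE Gs.Xs_obj])
    show "end_scalar (sd_carrier p q) (Zs i)"
      unfolding Zs_def by (rule te_end_scalar[OF TE Gs.Xs_obj Gs.Xs_simple])
    show "\<not> end_scalar (sd_carrier p q) (rep_tensor (Zs i) (Zs i))"
      unfolding Zs_def by (rule te_final2[OF TE Gs.Xs_obj Gs.Xs_noninv])
  next
    fix i j b :: nat assume i: "i < 3" and j: "j < 3" and ij: "i \<noteq> j"
    show "hom_zero (sd_carrier p q) rep_unit (rep_tensor (Zs i) (rpow (Zs j) b))"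
      unfolding Zs_def by (rule te_final[OF TE Gs.Xs_obj Gs.Xs_obj Gs.Xs_vanish[OF i j ij]])
  qed
qed

end
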